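(* Let $n\ge3$ and let $I=\{1,\dots,n-1\}$ label the path diagram $A_{n-1}$ (vertices $i$ and $i+1$ adjacent). Then $\mathrm{SO}(n)$, together with the homomorphisms $\tau_{i,i+1}:=\varepsilon_{\{i,i+1,i+2\}}:\mathrm{SO}(3)\to\mathrm{SO}(n)$ and, for $i<j$ with $j\neq i+1$, $\tau_{ij}:\mathrm{SO}(2)\times\mathrm{SO}(2)\to\mathrm{SO}(n)$, $(x,y)\mapsto\varepsilon_{\{i,i+1\}}(x)\,\varepsilon_{\{j,j+1\}}(y)$, is a universal enveloping group of the standard $\mathrm{SO}(2)$-amalgam $\mathcal A(A_{n-1},\mathrm{SO}(2))$.
   Context: For $L=\{l_1<\dots<l_m\}\subseteq\{1,\dots,n\}$, $\varepsilon_L:\mathrm{SO}(m)\to\mathrm{SO}(n)$ is the canonical embedding letting an $m\times m$ matrix act on the coordinates in $L$ (and trivially on the others). The standard $\mathrm{SO}(2)$-amalgam $\mathcal A(A_{n-1},\mathrm{SO}(2))$ consists of groups $G_{ij}$ ($i\ne j\in I$) with $G_{i,i+1}=\mathrm{SO}(3)$, connecting maps $\phi^i_{i,i+1}=\varepsilon_{\{1,2\}}$, $\phi^{i+1}_{i,i+1}=\varepsilon_{\{2,3\}}$ (upper-left and lower-right $2\times2$ blocks), and, for $|i-j|\ge2$, $i<j$, $G_{ij}=\mathrm{SO}(2)\times\mathrm{SO}(2)$ with $\phi^i_{ij}(x)=(x,1)$, $\phi^j_{ij}(x)=(1,x)$. An enveloping group of an amalgam $\{G_{ij},\phi^i_{ij}\}$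 is a group $G$ with homomorphisms $\tau_{ij}:G_{ij}\to G$ whose images generate $G$ and with $\tau_{ij}\circ\phi^j_{ij}=\tau_{kj}\circ\phi^j_{kj}$ for pairwise distinct $i,j,k$; it is universal if every other enveloping group $(H,\tau')$ receives a unique epimorphism $p:G\to H$ with $p\circ\tau_{ij}=\tau'_{ij}$. *)

theory Defs
  imports "Jordan_Normal_Form.Determinant" "HOL-Algebra.Generated_Groups"
begin

text \<open>Matrices are JNF matrices (0-based entries). The coordinates of R^n are
labelled 1..n as in the paper; row/column index i of a JNF matrix corresponds to
coordinate i+1.\<close>

definition SO_set :: "nat \<Rightarrow> real mat set" where
  "SO_set m = {A \<in> carrier_mat m m. A * transpose_mat A = 1\<^sub>m m \<and> det A = 1}"

definition SO_grp :: "nat \<Rightarrow> real mat monoid" where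
  "SO_grp m = \<lparr>carrier = SO_set m, mult = (*), one = 1\<^sub>m m\<rparr>"

text \<open>Canonical embedding eps_L : SO(card L) -> SO(n), L a subset of {1..n}:
the entry (l_a, l_b) of the result is A(a,b), where l_1 < ... < l_m enumerate L;
all other entries are those of the identity.  The 0-based position of l in L is
card {l' in L. l' < l}.\<close>

definition eps :: "nat \<Rightarrow> nat set \<Rightarrow> real mat \<Rightarrow> real mat" where
  "eps n L A = mat n n (\<lambda>(i, j).
     if Suc i \<in> L \<and> Suc j \<in> L
     then A $$ (card {l \<in> L. l < Suc i}, card {l \<in> L. l < Suc j})
     else if i = j then 1 else 0)"

abbreviation G_adj :: "real mat monoid" where "G_adj \<equiv> SO_grp 3"
abbreviation G_far :: "(real mat \<times> real mat) monoid" where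
  "G_far \<equiv> SO_grp 2 \<times>\<times> SO_grp 2"

definition phi_adj_lo :: "real mat \<Rightarrow> real mat" where "phi_adj_lo x = eps 3 {1,2} x"
definition phi_adj_hi :: "real mat \<Rightarrow> real mat" where "phi_adj_hi x = eps 3 {2,3} x"
definition phi_far_lo :: "real mat \<Rightarrow> real mat \<times> real mat" where "phi_far_lo x = (x, 1\<^sub>m 2)"
definition phi_far_hi :: "real mat \<Rightarrow> real mat \<times> real mat" where "phi_far_hi x = (1\<^sub>m 2, x)"

text \<open>A family of maps out of the amalgam into a group is given by
tA i : G_{i,i+1} -> H (1 <= i <= n-2) and tF i j : G_{ij} -> H (i < j, j >= i+2).
vmap tA tF i j is tau_{ij} o phi^j_{ij} : G_j = SO(2) -> H, for i \<noteq> j.\<close>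

definition vmap :: "(nat \<Rightarrow> real mat \<Rightarrow> 'h) \<Rightarrow> (nat \<Rightarrow> nat \<Rightarrow> real mat \<times> real mat \<Rightarrow> 'h)
    \<Rightarrow> nat \<Rightarrow> nat \<Rightarrow> real mat \<Rightarrow> 'h" where
  "vmap tA tF i j x =
     (if j = i + 1 then tA i (phi_adj_hi x)
      else if i = j + 1 then tA j (phi_adj_lo x)
      else if i < j then tF i j (phi_far_hi x)
      else tF j i (phi_far_lo x))"

definition adj_pair :: "nat \<Rightarrow> nat \<Rightarrow> bool" where
  "adj_pair n i = (1 \<le> i \<and> i + 1 \<le> n - 1)"

definition far_pair :: "nat \<Rightarrow> nat \<Rightarrow> nat \<Rightarrow> bool" where
  "far_pair n i j = (1 \<le> i \<and> i + 2 \<le> j \<and> j \<le> n - 1)"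

definition enveloping :: "nat \<Rightarrow> ('h, 'z) monoid_scheme \<Rightarrow> (nat \<Rightarrow> real mat \<Rightarrow> 'h)
    \<Rightarrow> (nat \<Rightarrow> nat \<Rightarrow> real mat \<times> real mat \<Rightarrow> 'h) \<Rightarrow> bool" where
  "enveloping n H tA tF \<longleftrightarrow>
     group H \<and>
     (\<forall>i. adj_pair n i \<longrightarrow> tA i \<in> hom G_adj H) \<and>
     (\<forall>i j. far_pair n i j \<longrightarrow> tF i j \<in> hom G_far H) \<and>
     generate H ((\<Union>i\<in>{i. adj_pair n i}. tA i ` carrier G_adj) \<union>
                 (\<Union>(i,j)\<in>{(i,j). far_pair n i j}. tF i j ` carrier G_far)) = carrier H \<and>
     (\<forall>i\<in>{1..n-1}. \<forall>j\<in>{1..n-1}. \<forall>k\<in>{1..n-1}. i \<noteq> j \<and> j \<noteq> k \<and> i \<noteq> k \<longrightarrow>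
        (\<forall>x\<in>carrier (SO_grp 2). vmap tA tF i j x = vmap tA tF k j x))"

definition tauA :: "nat \<Rightarrow> nat \<Rightarrow> real mat \<Rightarrow> real mat" where
  "tauA n i x = eps n {i, i+1, i+2} x"

definition tauF :: "nat \<Rightarrow> nat \<Rightarrow> nat \<Rightarrow> real mat \<times> real mat \<Rightarrow> real mat" where
  "tauF n i j p = eps n {i, i+1} (fst p) * eps n {j, j+1} (snd p)"

end

theory Submission
  imports Defs
begin


definition bd :: "nat \<Rightarrow> nat \<Rightarrow> real mat \<Rightarrow> real mat" where
 "bd n k A = mat n n (\<lambda>(i,j). if k \<le> i \<and> i < k + dim_row A \<and> k \<le> j \<and> j < k + dim_row A
     then A $$ (i-k, j-k) else if i = j then 1 else 0)"

definition fb :: "nat \<Rightarrow> nat \<Rightarrow> nat \<Rightarrow> real mat \<Rightarrow> real mat" where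
 "fb k m r A = four_block_mat (1\<^sub>m k) (0\<^sub>m k (m+r)) (0\<^sub>m (m+r) k)
   (four_block_mat A (0\<^sub>m m r) (0\<^sub>m r m) (1\<^sub>m r))"

lemma bd_four: assumes "A \<in> carrier_mat m m"
  shows "bd (k+m+r) k A = fb k m r A"
  using assms by (intro eq_matI) (auto simp: bd_def fb_def)

lemma bd_carrier[simp]: "bd n k A \<in> carrier_mat n n" by (simp add: bd_def)
lemma bd_dims[simp]: "dim_row (bd n k A) = n" "dim_col (bd n k A) = n" by (simp_all add: bd_def)

lemma fb_mult: assumes A: "A \<in> carrier_mat m m" and B: "B \<in> carrier_mat m m"
  shows "fb k m r A * fb k m r B = fb k m r (A * B)"
proof -
  let ?IA = "four_block_mat A (0\<^sub>m m r) (0\<^sub>m r m) (1\<^sub>m r)"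
  let ?IB = "four_block_mat B (0\<^sub>m m r) (0\<^sub>m r m) (1\<^sub>m r)"
  have cA: "?IA \<in> carrier_mat (m+r) (m+r)" using A by auto
  have cB: "?IB \<in> carrier_mat (m+r) (m+r)" using B by auto
  have i: "?IA * ?IB = four_block_mat (A*B) (0\<^sub>m m r) (0\<^sub>m r m) (1\<^sub>m r)"
    using A B by (subst mult_four_block_mat[of _ m m _ r]) auto
  have "fb k m r A * fb k m r B = four_block_mat (1\<^sub>m k) (0\<^sub>m k (m+r)) (0\<^sub>m (m+r) k) (?IA * ?IB)"
    unfolding fb_def using A B cA cB by (subst mult_four_block_mat[of _ k k _ "m+r"]) (auto simp: left_mult_zero_mat[OF cB] right_mult_zero_mat[OF cA])
  thus ?thesis using i by (simp add: fb_def)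
qed

lemma bd_mult: assumes A: "A \<in> carrier_mat m m" and B: "B \<in> carrier_mat m m" and k: "k+m \<le> n"
  shows "bd n k A * bd n k B = bd n k (A * B)"
proof -
  obtain r where n: "n = k+m+r" using k le_Suc_ex by blast
  show ?thesis using A B unfolding n by (simp add: bd_four fb_mult)
qed

lemma bd_det: assumes A: "A \<in> carrier_mat m m" and k: "k+m \<le> n"
  shows "det (bd n k A) = det A"
proof -
  obtain r where n: "n = k+m+r" using k le_Suc_ex by blast
  have cA: "four_block_mat A (0\<^sub>m m r) (0\<^sub>m r m) (1\<^sub>m r) \<in> carrier_mat (m+r) (m+r)"
    using A by auto
  have "det (fb k m r A) = det (four_block_mat A (0\<^sub>m m r) (0\<^sub>m r m) (1\<^sub>m r))"
    unfolding fb_def using cA by (subst det_four_block_mat_lower_left_zero[of _ k _ "m+r"]) auto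
  also have "\<dots> = det A" using A by (subst det_four_block_mat_lower_left_zero[of _ m _ r]) auto
  finally show ?thesis using A unfolding n by (simp add: bd_four)
qed

lemma bd_transpose: assumes "A \<in> carrier_mat m m"
  shows "transpose_mat (bd n k A) = bd n k (transpose_mat A)"
  using assms by (intro eq_matI) (auto simp: bd_def)

lemma bd_one: "bd n k (1\<^sub>m m) = 1\<^sub>m n"
  by (intro eq_matI) (auto simp: bd_def)



lemma mult_entry: "A \<in> carrier_mat n n \<Longrightarrow> B \<in> carrier_mat n n \<Longrightarrow> i < n \<Longrightarrow> j < n \<Longrightarrow>
  (A * B) $$ (i,j) = (\<Sum>t<n. A $$ (i,t) * B $$ (t,j))"
  by (auto simp: scalar_prod_def lessThan_atLeast0 intro!: sum.cong)

lemma sum_single: "j < (n::nat) \<Longrightarrow> (\<And>t. t < n \<Longrightarrow> t \<noteq> j \<Longrightarrow> g t = (0::real)) \<Longrightarrow> (\<Sum>t<n. g t) = g j"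
  by (subst sum.remove[of _ j]) (auto intro!: sum.neutral)

definition supp :: "nat \<Rightarrow> nat set \<Rightarrow> real mat \<Rightarrow> bool" where
  "supp n S P \<longleftrightarrow> (\<forall>i<n. \<forall>j<n. (i \<notin> S \<or> j \<notin> S) \<longrightarrow> P $$ (i,j) = (if i = j then 1 else 0))"

lemma supp_mult_entry:
  assumes P: "P \<in> carrier_mat n n" and Q: "Q \<in> carrier_mat n n"
    and sP: "supp n SP P" and sQ: "supp n SQ Q" and d: "SP \<inter> SQ = {}" and i: "i < n" and j: "j < n"
  shows "(P * Q) $$ (i,j) = (if j \<notin> SQ then P $$ (i,j) else Q $$ (i,j))"
proof -
  have e: "(P * Q) $$ (i,j) = (\<Sum>t<n. P $$ (i,t) * Q $$ (t,j))" using mult_entry[OF P Q i j] .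
  show ?thesis
  proof (cases "j \<in> SQ")
    case False
    have "(\<Sum>t<n. P $$ (i,t) * Q $$ (t,j)) = P $$ (i,j) * Q $$ (j,j)"
      by (rule sum_single[OF j]) (use sQ False j in \<open>auto simp: supp_def\<close>)
    thus ?thesis using e False sQ j by (auto simp: supp_def)
  next
    case jQ: True
    show ?thesis
    proof (cases "i \<in> SP")
      case False
      have "(\<Sum>t<n. P $$ (i,t) * Q $$ (t,j)) = P $$ (i,i) * Q $$ (i,j)"
        by (rule sum_single[OF i]) (use sP False i in \<open>auto simp: supp_def\<close>)
      thus ?thesis using e False sP i jQ by (auto simp: supp_def)
    next
      case iP: True
      have "(\<Sum>t<n. P $$ (i,t) * Q $$ (t,j)) = 0"
      proof (rule sum.neutral, intro ballI)
        fix t assume t: "t \<in> {..<n}"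
        show "P $$ (i,t) * Q $$ (t,j) = 0"
        proof (cases "t \<in> SP")
          case True
          hence "t \<notin> SQ" "t \<noteq> j" using d jQ by auto
          thus ?thesis using sQ t j by (auto simp: supp_def)
        next
          case False
          hence "t \<noteq> i" using iP by auto
          thus ?thesis using sP t i False by (auto simp: supp_def)
        qed
      qed
      moreover have "i \<notin> SQ" "i \<noteq> j" using iP jQ d by auto
      ultimately show ?thesis using e jQ sQ i j by (auto simp: supp_def)
    qed
  qed
qed

lemma supp_commute:
  assumes P: "P \<in> carrier_mat n n" and Q: "Q \<in> carrier_mat n n"
    and sP: "supp n SP P" and sQ: "supp n SQ Q" and d: "SP \<inter> SQ = {}"
  shows "P * Q = Q * P"
proof (rule eq_matI)
  fix i j assume i: "i < dim_row (Q * P)" and j: "j < dim_col (Q * P)"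
  hence i: "i < n" and j: "j < n" using P Q by auto
  have d': "SQ \<inter> SP = {}" using d by auto
  show "(P * Q) $$ (i,j) = (Q * P) $$ (i,j)"
    unfolding supp_mult_entry[OF P Q sP sQ d i j] supp_mult_entry[OF Q P sQ sP d' i j]
    using sP sQ d i j by (auto simp: supp_def)
qed (use P Q in auto)

lemma supp_mult:
  assumes P: "P \<in> carrier_mat n n" and Q: "Q \<in> carrier_mat n n"
    and sP: "supp n S P" and sQ: "supp n S Q"
  shows "supp n S (P * Q)"
  unfolding supp_def
proof (intro allI impI)
  fix i j assume i: "i < n" and j: "j < n" and ij: "i \<notin> S \<or> j \<notin> S"
  have e: "(P * Q) $$ (i,j) = (\<Sum>t<n. P $$ (i,t) * Q $$ (t,j))" using mult_entry[OF P Q i j] .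
  show "(P * Q) $$ (i,j) = (if i = j then 1 else 0)"
  proof (cases "j \<in> S")
    case False
    have "(\<Sum>t<n. P $$ (i,t) * Q $$ (t,j)) = P $$ (i,j) * Q $$ (j,j)"
      by (rule sum_single[OF j]) (use sQ False j in \<open>auto simp: supp_def\<close>)
    thus ?thesis using e False sQ sP i j by (auto simp: supp_def)
  next
    case True
    hence iS: "i \<notin> S" using ij by auto
    have "(\<Sum>t<n. P $$ (i,t) * Q $$ (t,j)) = P $$ (i,i) * Q $$ (i,j)"
      by (rule sum_single[OF i]) (use sP iS i in \<open>auto simp: supp_def\<close>)
    thus ?thesis using e iS sQ sP i j by (auto simp: supp_def)
  qed
qed

lemma supp_one[simp]: "supp n S (1\<^sub>m n)" by (auto simp: supp_def)

lemma supp_transpose: "P \<in> carrier_mat n n \<Longrightarrow> supp n S P \<Longrightarrow> supp n S (transpose_mat P)"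
  by (auto simp: supp_def)

lemma supp_mono: "supp n S P \<Longrightarrow> S \<subseteq> T \<Longrightarrow> supp n T P"
  unfolding supp_def by (meson subsetD)

lemma supp_bd: "A \<in> carrier_mat m m \<Longrightarrow> supp n {k..<k+m} (bd n k A)"
  by (auto simp: supp_def bd_def)

lemma card_lt: "k \<le> i \<Longrightarrow> i < k + m \<Longrightarrow> card {l \<in> {Suc k..<Suc k + m}. l < Suc i} = i - k"
proof -
  assume "k \<le> i" "i < k + m"
  hence "{l \<in> {Suc k..<Suc k + m}. l < Suc i} = {Suc k..<Suc i}" by auto
  thus ?thesis by simp
qed

lemma card_lt': "k \<le> i \<Longrightarrow> i < k + m \<Longrightarrow> card {l. Suc k \<le> l \<and> l < Suc (k + m) \<and> l < Suc i} = i - k"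
proof -
  assume "k \<le> i" "i < k + m"
  hence "{l. Suc k \<le> l \<and> l < Suc (k + m) \<and> l < Suc i} = {Suc k..<Suc i}" by auto
  thus ?thesis by simp
qed

lemma eps_bd: assumes "A \<in> carrier_mat m m"
  shows "eps n {Suc k..<Suc k + m} A = bd n k A"
  using assms by (intro eq_matI) (auto simp: eps_def bd_def card_lt')

lemma eps2: "A \<in> carrier_mat 2 2 \<Longrightarrow> eps n {Suc k, Suc (Suc k)} A = bd n k A"
proof -
  assume A: "A \<in> carrier_mat 2 2"
  have "{Suc k, Suc (Suc k)} = {Suc k..<Suc k + 2}" by auto
  thus ?thesis using eps_bd[OF A] by simp
qed

lemma eps3: "A \<in> carrier_mat 3 3 \<Longrightarrow> eps n {Suc k, Suc (Suc k), Suc (Suc (Suc k))} A = bd n k A"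
proof -
  assume A: "A \<in> carrier_mat 3 3"
  have "{Suc k, Suc (Suc k), Suc (Suc (Suc k))} = {Suc k..<Suc k + 3}" by auto
  thus ?thesis using eps_bd[OF A] by simp
qed

lemma bd_bd_hi: "x \<in> carrier_mat 2 2 \<Longrightarrow> bd n k (bd 3 1 x) = bd n (Suc k) x"
  by (intro eq_matI) (auto simp: bd_def)

lemma bd_bd_lo: "x \<in> carrier_mat 2 2 \<Longrightarrow> bd n k (bd 3 0 x) = bd n k x"
  by (intro eq_matI) (auto simp: bd_def)




lemma SO_grp_simps[simp]: "carrier (SO_grp n) = SO_set n" "mult (SO_grp n) = (*)" "one (SO_grp n) = 1\<^sub>m n"
  by (simp_all add: SO_grp_def)

lemma SO_D: assumes "A \<in> SO_set n"
  shows "A \<in> carrier_mat n n" "A * transpose_mat A = 1\<^sub>m n" "transpose_mat A * A = 1\<^sub>m n" "det A = 1"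
proof -
  show A: "A \<in> carrier_mat n n" and AA: "A * transpose_mat A = 1\<^sub>m n" and "det A = 1"
    using assms by (auto simp: SO_set_def)
  show "transpose_mat A * A = 1\<^sub>m n"
    by (rule mat_mult_left_right_inverse[OF A _ AA]) (use A in auto)
qed

lemma SO_I: "A \<in> carrier_mat n n \<Longrightarrow> A * transpose_mat A = 1\<^sub>m n \<Longrightarrow> det A = 1 \<Longrightarrow> A \<in> SO_set n"
  by (auto simp: SO_set_def)

lemma SO_one[simp]: "1\<^sub>m n \<in> SO_set n"
  by (auto simp: SO_set_def)

lemma SO_mult: assumes A: "A \<in> SO_set n" and B: "B \<in> SO_set n" shows "A * B \<in> SO_set n"
proof -
  note a = SO_D[OF A] and b = SO_D[OF B]
  have "A * B * transpose_mat (A * B) = A * (B * transpose_mat B) * transpose_mat A"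
    using a(1) b(1) by (simp add: transpose_mult assoc_mult_mat[of _ n n _ n _ n])
  also have "\<dots> = 1\<^sub>m n" using a b by simp
  finally show ?thesis using a b by (intro SO_I) (auto simp: det_mult[of _ n])
qed

lemma SO_transpose: assumes A: "A \<in> SO_set n" shows "transpose_mat A \<in> SO_set n"
  using SO_D[OF A] by (intro SO_I) (auto simp: det_transpose)

lemma group_SO: "group (SO_grp n)"
proof (rule groupI)
  fix x y z assume "x \<in> carrier (SO_grp n)" "y \<in> carrier (SO_grp n)" "z \<in> carrier (SO_grp n)"
  thus "x \<otimes>\<^bsub>SO_grp n\<^esub> y \<otimes>\<^bsub>SO_grp n\<^esub> z = x \<otimes>\<^bsub>SO_grp n\<^esub> (y \<otimes>\<^bsub>SO_grp n\<^esub> z)"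
    by (auto dest!: SO_D(1) intro: assoc_mult_mat)
next
  fix x assume x: "x \<in> carrier (SO_grp n)"
  thus "\<one>\<^bsub>SO_grp n\<^esub> \<otimes>\<^bsub>SO_grp n\<^esub> x = x" by (auto dest!: SO_D(1))
  show "\<exists>y\<in>carrier (SO_grp n). y \<otimes>\<^bsub>SO_grp n\<^esub> x = \<one>\<^bsub>SO_grp n\<^esub>"
    using x SO_transpose[of x n] SO_D(3)[of x n] by auto
qed (auto simp: SO_mult)

lemma SO_inv: assumes A: "A \<in> SO_set n" shows "inv\<^bsub>SO_grp n\<^esub> A = transpose_mat A"
  apply (rule group.inv_equality[OF group_SO])
  using SO_D[OF A] SO_transpose[OF A] A by auto

lemma bd_SO: assumes A: "A \<in> SO_set m" and k: "k + m \<le> n" shows "bd n k A \<in> SO_set n"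
proof -
  note a = SO_D[OF A]
  show ?thesis
    by (intro SO_I) (use a k in \<open>auto simp: bd_transpose bd_mult bd_one bd_det\<close>)
qed

lemma bd_hom: assumes "k + m \<le> n" shows "bd n k \<in> hom (SO_grp m) (SO_grp n)"
proof (rule homI)
  fix x y assume "x \<in> carrier (SO_grp m)" "y \<in> carrier (SO_grp m)"
  thus "bd n k (x \<otimes>\<^bsub>SO_grp m\<^esub> y) = bd n k x \<otimes>\<^bsub>SO_grp n\<^esub> bd n k y"
    using bd_mult[OF SO_D(1) SO_D(1) assms] by simp
qed (use bd_SO assms in auto)




lemma det2: assumes A: "A \<in> carrier_mat 2 2"
  shows "det A = A $$ (0,0) * A $$ (1,1) - A $$ (0,1) * A $$ (1,0)"
proof -
  have c: "\<And>i j. mat_delete A i j \<in> carrier_mat 1 1" using mat_delete_carrier[OF A] by simp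
  have "det A = (\<Sum>j<2. A $$ (0,j) * cofactor A 0 j)" by (rule laplace_expansion_row[OF A]) simp
  also have "\<dots> = A $$ (0,0) * cofactor A 0 0 + A $$ (0,1) * cofactor A 0 1"
    by (simp add: numeral_2_eq_2)
  also have "cofactor A 0 0 = A $$ (1,1)" unfolding cofactor_def det_single[OF c]
    using A by (simp add: mat_delete_def)
  also have "cofactor A 0 1 = - A $$ (1,0)" unfolding cofactor_def det_single[OF c]
    using A by (simp add: mat_delete_def)
  finally show ?thesis by simp
qed

definition rot :: "real \<Rightarrow> real \<Rightarrow> real mat" where
  "rot a b = mat 2 2 (\<lambda>(i,j). if i = j then a else if i = 0 then b else -b)"

lemma rot_carrier[simp]: "rot a b \<in> carrier_mat 2 2" by (simp add: rot_def)

lemma rot_entries[simp]: "rot a b $$ (0,0) = a" "rot a b $$ (0,1) = b" "rot a b $$ (1,0) = -b" "rot a b $$ (1,1) = a"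
  "rot a b $$ (0,Suc 0) = b" "rot a b $$ (Suc 0,0) = -b" "rot a b $$ (Suc 0,Suc 0) = a"
  by (simp_all add: rot_def)

lemma rot_dims[simp]: "dim_row (rot a b) = 2" "dim_col (rot a b) = 2" by (simp_all add: rot_def)

lemma sum2: "(\<Sum>t<(2::nat). f t) = f 0 + (f 1 :: real)"
  by (simp add: numeral_2_eq_2)

lemma rot_SO: assumes "a^2 + b^2 = 1" shows "rot a b \<in> SO_set 2"
proof (rule SO_I)
  show "rot a b * transpose_mat (rot a b) = 1\<^sub>m 2"
  proof (rule eq_matI)
    fix i j assume "i < dim_row (1\<^sub>m 2)" "j < dim_col (1\<^sub>m (2::nat))"
    hence ij: "i < 2" "j < 2" by auto
    have "(rot a b * transpose_mat (rot a b)) $$ (i,j) = rot a b $$ (i,0) * rot a b $$ (j,0) + rot a b $$ (i,1) * rot a b $$ (j,1)"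
      using mult_entry[of "rot a b" 2 "transpose_mat (rot a b)" i j] ij by (simp add: sum2)
    also have "\<dots> = (1\<^sub>m 2 :: real mat) $$ (i,j)"
      using ij assms by (auto simp: less_2_cases_iff power2_eq_square algebra_simps)
    finally show "(rot a b * transpose_mat (rot a b)) $$ (i,j) = (1\<^sub>m 2 :: real mat) $$ (i,j)" .
  qed auto
  show "det (rot a b) = 1" using assms by (simp add: det2 power2_eq_square)
qed simp

lemma rot_one: "rot 1 0 = 1\<^sub>m 2"
  by (intro eq_matI) (auto simp: rot_def)

lemma SO2_rot: assumes x: "x \<in> SO_set 2"
  shows "x = rot (x $$ (0,0)) (x $$ (0,1))"
proof -
  note d = SO_D[OF x]
  let ?p = "x $$ (0,0)" and ?q = "x $$ (0,1)" and ?r = "x $$ (1,0)" and ?s = "x $$ (1,1)"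
  have e: "\<And>i j. i < 2 \<Longrightarrow> j < 2 \<Longrightarrow> (\<Sum>t<2. x $$ (i,t) * x $$ (j,t)) = (if i = j then 1 else 0)"
  proof -
    fix i j :: nat assume ij: "i < 2" "j < 2"
    have "(x * transpose_mat x) $$ (i,j) = (\<Sum>t<2. x $$ (i,t) * x $$ (j,t))"
      using mult_entry[of x 2 "transpose_mat x" i j] ij d(1) by (simp add: sum2)
    thus "(\<Sum>t<2. x $$ (i,t) * x $$ (j,t)) = (if i = j then 1 else 0)" using d(2) ij by simp
  qed
  have e1: "?p*?p + ?q*?q = 1" using e[of 0 0] by (simp add: sum2)
  have e2: "?r*?r + ?s*?s = 1" using e[of 1 1] by (simp add: sum2)
  have dt: "?p*?s - ?q*?r = 1" using d(4) det2[OF d(1)] by simp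
  have "(?s - ?p)^2 + (?r + ?q)^2 = 0"
    using e1 e2 dt by (simp add: power2_eq_square algebra_simps)
  hence "?s = ?p" "?r = -?q"
    by (smt (verit) sum_power2_eq_zero_iff)+
  thus ?thesis using d(1)
    by (intro eq_matI) (auto simp: rot_def less_2_cases_iff)
qed

lemma SO2_norm: assumes x: "x \<in> SO_set 2" shows "(x $$ (0,0))^2 + (x $$ (0,1))^2 = 1"
proof -
  note d = SO_D[OF x]
  have "(x * transpose_mat x) $$ (0,0) = (\<Sum>t<2. x $$ (0,t) * x $$ (0,t))"
    using mult_entry[of x 2 "transpose_mat x" 0 0] d(1) by (simp add: sum2)
  thus ?thesis using d(2) by (simp add: sum2 power2_eq_square)
qed

lemma SO2_triv: assumes x: "x \<in> SO_set 2" and "x $$ (0,1) = 0" "x $$ (1,1) = 1"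
  shows "x = 1\<^sub>m 2"
proof -
  have "x = rot (x $$ (0,0)) (x $$ (0,1))" by (rule SO2_rot[OF x])
  moreover have "x $$ (0,0) = 1" using SO2_rot[OF x] assms(3)
    by (metis rot_entries(4))
  ultimately show ?thesis using assms(2) rot_one by simp
qed

lemma mv_entry: "(A :: real mat) \<in> carrier_mat n n \<Longrightarrow> v \<in> carrier_vec n \<Longrightarrow> i < n \<Longrightarrow>
   (A *\<^sub>v v) $ i = (\<Sum>j<n. A $$ (i,j) * v $ j)"
  by (auto simp: scalar_prod_def lessThan_atLeast0 intro!: sum.cong)

lemma mv_smult_unit: "(A :: real mat) \<in> carrier_mat n n \<Longrightarrow> j < n \<Longrightarrow>
   A *\<^sub>v (c \<cdot>\<^sub>v unit_vec n j) = vec n (\<lambda>i. c * A $$ (i,j))"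
proof (intro eq_vecI)
  fix i assume A: "A \<in> carrier_mat n n" and j: "j < n" and i: "i < dim_vec (vec n (\<lambda>i. c * A $$ (i,j)))"
  hence i: "i < n" by simp
  have "(A *\<^sub>v (c \<cdot>\<^sub>v unit_vec n j)) $ i = (\<Sum>k<n. A $$ (i,k) * (c \<cdot>\<^sub>v unit_vec n j) $ k)"
    using mv_entry[OF A _ i] by simp
  also have "\<dots> = A $$ (i,j) * (c \<cdot>\<^sub>v unit_vec n j) $ j"
    by (rule sum_single[OF j, where g = "\<lambda>k. A $$ (i,k) * (c \<cdot>\<^sub>v unit_vec n j) $ k"]) (auto simp: unit_vec_def)
  finally show "(A *\<^sub>v (c \<cdot>\<^sub>v unit_vec n j)) $ i = vec n (\<lambda>i. c * A $$ (i,j)) $ i"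
    using i j by simp
qed auto

lemma supp_bd_SO: assumes A: "A \<in> SO_set n" and s: "supp n {k..<k+m} A" and km: "k + m \<le> n"
  shows "\<exists>A'\<in>SO_set m. A = bd n k A'"
proof -
  note d = SO_D[OF A]
  define A' where "A' = mat m m (\<lambda>(i,j). A $$ (i+k, j+k))"
  have cA': "A' \<in> carrier_mat m m" by (simp add: A'_def)
  have eq: "A = bd n k A'"
    using d(1) s km by (intro eq_matI) (auto simp: bd_def A'_def supp_def)
  have inj: "\<And>B C. B \<in> carrier_mat m m \<Longrightarrow> C \<in> carrier_mat m m \<Longrightarrow> bd n k B = bd n k C \<Longrightarrow> B = C"
  proof -
    fix B C :: "real mat" assume B: "B \<in> carrier_mat m m" and C: "C \<in> carrier_mat m m" and e: "bd n k B = bd n k C"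
    show "B = C"
    proof (rule eq_matI)
      fix i j assume "i < dim_row C" "j < dim_col C"
      hence ij: "i < m" "j < m" using C by auto
      have "bd n k B $$ (i+k, j+k) = bd n k C $$ (i+k, j+k)" using e by simp
      thus "B $$ (i,j) = C $$ (i,j)" using ij B C km by (simp add: bd_def)
    qed (use B C in auto)
  qed
  have "bd n k (A' * transpose_mat A') = bd n k (1\<^sub>m m)"
    using d(2) eq cA' km by (simp add: bd_mult[symmetric] bd_transpose bd_one)
  hence o: "A' * transpose_mat A' = 1\<^sub>m m" using inj cA' by auto
  have "det A' = 1" using bd_det[OF cA' km] eq d(4) by simp
  hence "A' \<in> SO_set m" using o cA' by (intro SO_I)
  thus ?thesis using eq by blast
qed

lemma supp1_triv: assumes A: "A \<in> SO_set n" and s: "supp n {0..<1} A" and n: "1 \<le> n"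
  shows "A = 1\<^sub>m n"
proof -
  have s': "supp n {0..<0+1} A" using s by simp
  obtain A' where A': "A' \<in> SO_set 1" and eq: "A = bd n 0 A'"
    using supp_bd_SO[OF A s'] n by auto
  have c: "A' \<in> carrier_mat 1 1" using SO_D(1)[OF A'] .
  have "A' $$ (0,0) = 1" using SO_D(4)[OF A'] det_single[OF c] by simp
  hence "A' = 1\<^sub>m 1" using c by (intro eq_matI) auto
  thus ?thesis using eq bd_one by simp
qed




lemma SO_rows: assumes A: "A \<in> SO_set n" and i: "i < n" and j: "j < n"
  shows "(\<Sum>k<n. A $$ (i,k) * A $$ (j,k)) = (if i = j then 1 else 0)"
proof -
  note d = SO_D[OF A]
  have "(A * transpose_mat A) $$ (i,j) = (\<Sum>k<n. A $$ (i,k) * transpose_mat A $$ (k,j))"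
    using mult_entry[OF d(1) _ i j] d(1) by simp
  also have "\<dots> = (\<Sum>k<n. A $$ (i,k) * A $$ (j,k))" using d(1) j by (intro sum.cong) auto
  finally show ?thesis using d(2) i j by simp
qed

lemma SO_cols: assumes A: "A \<in> SO_set n" and i: "i < n" and j: "j < n"
  shows "(\<Sum>k<n. A $$ (k,i) * A $$ (k,j)) = (if i = j then 1 else 0)"
proof -
  note d = SO_D[OF A]
  have "(transpose_mat A * A) $$ (i,j) = (\<Sum>k<n. transpose_mat A $$ (i,k) * A $$ (k,j))"
    using mult_entry[OF _ d(1) i j] d(1) by simp
  also have "\<dots> = (\<Sum>k<n. A $$ (k,i) * A $$ (k,j))" using d(1) i by (intro sum.cong) auto
  finally show ?thesis using d(3) i j by simp
qed

lemma sum_two: "i < j \<Longrightarrow> j < (n::nat) \<Longrightarrow> (\<And>t. t < n \<Longrightarrow> t \<noteq> i \<Longrightarrow> t \<noteq> j \<Longrightarrow> g t = (0::real))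
   \<Longrightarrow> (\<Sum>t<n. g t) = g i + g j"
proof -
  assume ij: "i < j" "j < n" and z: "\<And>t. t < n \<Longrightarrow> t \<noteq> i \<Longrightarrow> t \<noteq> j \<Longrightarrow> g t = 0"
  have "(\<Sum>t<n. g t) = g j + (\<Sum>t\<in>{..<n} - {j}. g t)" using ij by (subst sum.remove[of _ j]) auto
  also have "(\<Sum>t\<in>{..<n} - {j}. g t) = g i + (\<Sum>t\<in>{..<n} - {j} - {i}. g t)"
    using ij by (subst sum.remove[of _ i]) auto
  also have "(\<Sum>t\<in>{..<n} - {j} - {i}. g t) = 0" using z by (intro sum.neutral) auto
  finally show ?thesis by simp
qed

lemma bd_entry_col: assumes x: "x \<in> carrier_mat 2 2" and m: "1 \<le> m" "Suc m \<le> n" and k: "k < n"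
  shows "bd n (m-1) x $$ (k, m) = (if k = m - 1 then x $$ (0,1) else if k = m then x $$ (1,1) else 0)"
  using x m k by (auto simp: bd_def)

lemma trans_col:
  assumes m: "1 \<le> m" "m \<le> n" and w: "\<forall>i. m \<le> i \<longrightarrow> i < n \<longrightarrow> w i = 0"
  shows "\<exists>a t. a \<in> SO_set n \<and> supp n {0..<m} a \<and> (\<forall>i<n. t * a $$ (i, m-1) = w i)"
  using m w
proof (induction m arbitrary: w rule: nat_induct_at_least)
  case base
  show ?case
  proof (intro exI conjI allI impI)
    show "1\<^sub>m n \<in> SO_set n" by simp
    show "supp n {0..<1} (1\<^sub>m n)" by simp
    fix i assume "i < n" thus "w 0 * 1\<^sub>m n $$ (i, 1-1) = w i" using base by auto
  qed
next
  case (Suc m)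
  define w' where "w' i = (if i = m then 0 else w i)" for i
  obtain a' t' where a': "a' \<in> SO_set n" "supp n {0..<m} a'" and ta': "\<forall>i<n. t' * a' $$ (i, m-1) = w' i"
  proof -
    have "\<forall>i. m \<le> i \<longrightarrow> i < n \<longrightarrow> w' i = 0"
      using Suc.prems by (auto simp: w'_def)
    thus ?thesis using Suc.IH[of w'] Suc.prems that by auto
  qed
  note da = SO_D[OF a'(1)]
  define c where "c = sqrt (t'^2 + (w m)^2)"
  define x where "x = (if c = 0 then rot 1 0 else rot (w m / c) (t' / c))"
  have xSO: "x \<in> SO_set 2"
  proof (cases "c = 0")
    case True thus ?thesis by (simp add: x_def rot_SO)
  next
    case False
    have c2: "(w m)^2 + t'^2 = c^2" unfolding c_def by simp
    have "(w m / c)^2 + (t'/c)^2 = ((w m)^2 + t'^2) / c^2" by (simp add: power_divide add_divide_distrib)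
    also have "\<dots> = 1" unfolding c2 using False by simp
    finally have "(w m / c)^2 + (t'/c)^2 = 1" .
    thus ?thesis using False by (simp add: x_def rot_SO)
  qed
  have xc: "x \<in> carrier_mat 2 2" using SO_D(1)[OF xSO] .
  define \<rho> where "\<rho> = bd n (m-1) x"
  have rSO: "\<rho> \<in> SO_set n" unfolding \<rho>_def using bd_SO[OF xSO] Suc.hyps Suc.prems by simp
  have rs: "supp n {0..<Suc m} \<rho>"
    unfolding \<rho>_def by (rule supp_mono[OF supp_bd[OF xc]]) (use Suc.hyps in auto)
  show ?case
  proof (intro exI conjI allI impI)
    show "a' * \<rho> \<in> SO_set n" using SO_mult[OF a'(1) rSO] .
    show "supp n {0..<Suc m} (a' * \<rho>)"
      by (rule supp_mult[OF da(1) SO_D(1)[OF rSO] supp_mono[OF a'(2)] rs]) auto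
    fix i assume i: "i < n"
    have mn: "m < n" "m - 1 < m" using Suc by auto
    have e: "(a' * \<rho>) $$ (i, m) = a' $$ (i, m-1) * \<rho> $$ (m-1, m) + a' $$ (i, m) * \<rho> $$ (m, m)"
      unfolding mult_entry[OF da(1) SO_D(1)[OF rSO] i mn(1)]
    proof (rule sum_two[OF mn(2) mn(1)])
      fix t assume "t < n" "t \<noteq> m - 1" "t \<noteq> m"
      thus "a' $$ (i, t) * \<rho> $$ (t, m) = 0"
        using bd_entry_col[OF xc Suc.hyps, of n t] Suc.prems unfolding \<rho>_def by simp
    qed
    have ai: "a' $$ (i, m) = (if i = m then 1 else 0)" using a'(2) i mn by (auto simp: supp_def)
    have r1: "\<rho> $$ (m-1, m) = x $$ (0,1)" "\<rho> $$ (m, m) = x $$ (1,1)"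
      unfolding \<rho>_def using bd_entry_col[OF xc] Suc.hyps Suc.prems mn by auto
    show "c * (a' * \<rho>) $$ (i, Suc m - 1) = w i"
    proof (cases "c = 0")
      case True
      hence "t' = 0" "w m = 0" unfolding c_def by (auto simp: add_nonneg_eq_0_iff)
      hence "w i = 0" using ta' i by (cases "i = m") (auto simp: w'_def)
      thus ?thesis using True by simp
    next
      case False
      have "c * (a' * \<rho>) $$ (i, m) = t' * a' $$ (i, m-1) + w m * a' $$ (i,m)"
        unfolding e r1 using False by (simp add: x_def field_simps)
      also have "\<dots> = w i" using ta' i ai by (auto simp: w'_def)
      finally show ?thesis by simp
    qed
  qed
qed




lemma decomp:
  assumes m: "1 \<le> m" "Suc m \<le> n" and g: "g \<in> SO_set n" and gs: "supp n {0..<Suc m} g"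
  shows "\<exists>a b x. a \<in> SO_set n \<and> supp n {0..<m} a \<and> b \<in> SO_set n \<and> supp n {0..<m} b \<and>
     x \<in> SO_set 2 \<and> g = a * bd n (m-1) x * b"
proof -
  note dg = SO_D[OF g]
  have mn: "m < n" "m - 1 < m" "m - 1 < n" using m by auto
  define w where "w i = (if i = m then 0 else g $$ (i,m))" for i
  have wz: "\<forall>i. m \<le> i \<longrightarrow> i < n \<longrightarrow> w i = 0"
    using gs by (auto simp: w_def supp_def)
  obtain a t where a: "a \<in> SO_set n" "supp n {0..<m} a" and at: "\<forall>i<n. t * a $$ (i, m-1) = w i"
    using trans_col[OF m(1) _ wz] mn by auto
  note da = SO_D[OF a(1)]
  define gmm where "gmm = g $$ (m,m)"
  have gcol: "\<And>k. k < n \<Longrightarrow> g $$ (k,m) = t * a $$ (k, m-1) + (if k = m then gmm else 0)"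
    using at by (auto simp: w_def gmm_def)
  have aT: "transpose_mat a \<in> SO_set n" using SO_transpose[OF a(1)] .
  define h where "h = transpose_mat a * g"
  have hSO: "h \<in> SO_set n" unfolding h_def using SO_mult[OF aT g] .
  note dh = SO_D[OF hSO]
  have hcol: "\<And>i. i < n \<Longrightarrow> h $$ (i,m) = (if i = m - 1 then t else if i = m then gmm else 0)"
  proof -
    fix i assume i: "i < n"
    have "h $$ (i,m) = (\<Sum>k<n. transpose_mat a $$ (i,k) * g $$ (k,m))"
      unfolding h_def using mult_entry[OF SO_D(1)[OF aT] dg(1) i mn(1)] .
    also have "\<dots> = (\<Sum>k<n. t * (a $$ (k,i) * a $$ (k, m-1)) + a $$ (k,i) * (if k = m then gmm else 0))"
      using i da(1) gcol by (intro sum.cong) (auto simp: algebra_simps)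
    also have "\<dots> = t * (\<Sum>k<n. a $$ (k,i) * a $$ (k, m-1)) + (\<Sum>k<n. a $$ (k,i) * (if k = m then gmm else 0))"
      by (simp add: sum.distrib sum_distrib_left)
    also have "(\<Sum>k<n. a $$ (k,i) * a $$ (k, m-1)) = (if i = m - 1 then 1 else 0)"
      using SO_cols[OF a(1) i mn(3)] .
    also have "(\<Sum>k<n. a $$ (k,i) * (if k = m then gmm else 0)) = a $$ (m,i) * gmm"
      by (subst sum_single[OF mn(1)]) auto
    also have "a $$ (m,i) = (if i = m then 1 else 0)" using a(2) i mn by (auto simp: supp_def)
    finally show "h $$ (i,m) = (if i = m - 1 then t else if i = m then gmm else 0)"
      using mn by auto
  qed
  have "(\<Sum>k<n. h $$ (k,m) * h $$ (k,m)) = 1" using SO_cols[OF hSO mn(1) mn(1)] by simp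
  moreover have "(\<Sum>k<n. h $$ (k,m) * h $$ (k,m)) = h $$ (m-1,m) * h $$ (m-1,m) + h $$ (m,m) * h $$ (m,m)"
    by (rule sum_two[OF mn(2) mn(1)]) (simp add: hcol)
  ultimately have norm: "gmm^2 + t^2 = 1" using hcol mn by (simp add: power2_eq_square)
  define x where "x = rot gmm t"
  have xSO: "x \<in> SO_set 2" unfolding x_def using rot_SO[OF norm] .
  have xc: "x \<in> carrier_mat 2 2" using SO_D(1)[OF xSO] .
  define \<rho> where "\<rho> = bd n (m-1) x"
  have rSO: "\<rho> \<in> SO_set n" unfolding \<rho>_def using bd_SO[OF xSO] m by simp
  note dr = SO_D[OF rSO]
  have rs: "supp n {0..<Suc m} \<rho>"
    unfolding \<rho>_def by (rule supp_mono[OF supp_bd[OF xc]]) (use m in auto)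
  have rcol: "\<And>k. k < n \<Longrightarrow> \<rho> $$ (k,m) = h $$ (k,m)"
    unfolding \<rho>_def using bd_entry_col[OF xc m] hcol by (simp add: x_def)
  define b where "b = transpose_mat \<rho> * h"
  have rT: "transpose_mat \<rho> \<in> SO_set n" using SO_transpose[OF rSO] .
  have bSO: "b \<in> SO_set n" unfolding b_def using SO_mult[OF rT hSO] .
  note db = SO_D[OF bSO]
  have geq: "g = a * \<rho> * b"
  proof -
    have "a * \<rho> * b = a * (\<rho> * (transpose_mat \<rho> * h))"
      unfolding b_def using da(1) dr(1) dh(1) by (simp add: assoc_mult_mat[of _ n n _ n _ n])
    also have "\<rho> * (transpose_mat \<rho> * h) = (\<rho> * transpose_mat \<rho>) * h"
      using dr(1) dh(1) by (simp add: assoc_mult_mat[of _ n n _ n _ n])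
    also have "\<dots> = h" using dr(2) dh(1) by simp
    also have "a * h = (a * transpose_mat a) * g"
      unfolding h_def using da(1) dg(1) by (simp add: assoc_mult_mat[of _ n n _ n _ n])
    also have "\<dots> = g" using da(2) dg(1) by simp
    finally show ?thesis by simp
  qed
  have bs1: "supp n {0..<Suc m} b"
    unfolding b_def h_def
    by (rule supp_mult[OF SO_D(1)[OF rT] _ supp_transpose[OF dr(1) rs]
          supp_mult[OF SO_D(1)[OF aT] dg(1) supp_transpose[OF da(1) supp_mono[OF a(2)]] gs]])
       (use da(1) dg(1) in auto)
  have bcol: "\<And>i. i < n \<Longrightarrow> b $$ (i,m) = (if i = m then 1 else 0)"
  proof -
    fix i assume i: "i < n"
    have "b $$ (i,m) = (\<Sum>k<n. transpose_mat \<rho> $$ (i,k) * h $$ (k,m))"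
      unfolding b_def using mult_entry[OF SO_D(1)[OF rT] dh(1) i mn(1)] .
    also have "\<dots> = (\<Sum>k<n. \<rho> $$ (k,i) * \<rho> $$ (k,m))"
      using i dr(1) rcol by (intro sum.cong) auto
    also have "\<dots> = (if i = m then 1 else 0)" using SO_cols[OF rSO i mn(1)] .
    finally show "b $$ (i,m) = (if i = m then 1 else 0)" .
  qed
  have brow: "\<And>j. j < n \<Longrightarrow> j \<noteq> m \<Longrightarrow> b $$ (m,j) = 0"
  proof -
    fix j assume j: "j < n" "j \<noteq> m"
    have "(\<Sum>k<n. b $$ (m,k) * b $$ (m,k)) = 1" using SO_rows[OF bSO mn(1) mn(1)] by simp
    moreover have "(\<Sum>k<n. b $$ (m,k) * b $$ (m,k)) = b $$ (m,m) * b $$ (m,m) + (\<Sum>k\<in>{..<n} - {m}. b $$ (m,k) * b $$ (m,k))"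
      using mn by (subst sum.remove[of _ m]) auto
    ultimately have z: "(\<Sum>k\<in>{..<n} - {m}. b $$ (m,k) * b $$ (m,k)) = 0" using bcol[OF mn(1)] by simp
    have "\<forall>k\<in>{..<n} - {m}. b $$ (m,k) * b $$ (m,k) = 0"
      using sum_nonneg_eq_0_iff[of "{..<n} - {m}" "\<lambda>k. b $$ (m,k) * b $$ (m,k)"] z by auto
    thus "b $$ (m,j) = 0" using j by auto
  qed
  have bs: "supp n {0..<m} b"
    unfolding supp_def
  proof (intro allI impI)
    fix i j assume i: "i < n" and j: "j < n" and ij: "i \<notin> {0..<m} \<or> j \<notin> {0..<m}"
    show "b $$ (i,j) = (if i = j then 1 else 0)"
    proof (cases "i \<notin> {0..<Suc m} \<or> j \<notin> {0..<Suc m}")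
      case True thus ?thesis using bs1 i j by (auto simp: supp_def)
    next
      case False
      hence "i = m \<or> j = m" using ij by auto
      thus ?thesis using bcol brow i j by auto
    qed
  qed
  show ?thesis using a xSO bSO bs geq unfolding \<rho>_def by blast
qed




lemma SO_induct_supp:
  assumes n: "1 \<le> n" and one: "P (1\<^sub>m n)" and mult: "\<And>a b. P a \<Longrightarrow> P b \<Longrightarrow> P (a * b)"
    and rot: "\<And>k x. Suc (Suc k) \<le> n \<Longrightarrow> x \<in> SO_set 2 \<Longrightarrow> P (bd n k x)"
    and m: "1 \<le> m" "m \<le> n"
  shows "\<forall>g. g \<in> SO_set n \<and> supp n {0..<m} g \<longrightarrow> P g"
  using m
proof (induction m rule: nat_induct_at_least)
  case base
  show ?case using supp1_triv n one by auto
next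
  case (Suc m)
  show ?case
  proof (intro allI impI)
    fix g assume g: "g \<in> SO_set n \<and> supp n {0..<Suc m} g"
    obtain a b x where ab: "a \<in> SO_set n" "supp n {0..<m} a" "b \<in> SO_set n" "supp n {0..<m} b"
      "x \<in> SO_set 2" "g = a * bd n (m-1) x * b"
      using decomp[OF Suc.hyps Suc.prems] g by blast
    have "P a" "P b" using Suc.IH Suc.prems ab by auto
    moreover have "P (bd n (m-1) x)" using rot[OF _ ab(5)] Suc.hyps Suc.prems by simp
    ultimately show "P g" using ab(6) mult by simp
  qed
qed

lemma SO_induct:
  assumes n: "1 \<le> n" and one: "P (1\<^sub>m n)" and mult: "\<And>a b. P a \<Longrightarrow> P b \<Longrightarrow> P (a * b)"
    and rot: "\<And>k x. Suc (Suc k) \<le> n \<Longrightarrow> x \<in> SO_set 2 \<Longrightarrow> P (bd n k x)"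
    and g: "g \<in> SO_set n"
  shows "P g"
proof -
  have "supp n {0..<n} g" by (auto simp: supp_def)
  thus ?thesis using SO_induct_supp[OF n one mult rot n order.refl] g by blast
qed

lemma euler3: assumes X: "X \<in> SO_set 3"
  shows "\<exists>a b c. a \<in> SO_set 2 \<and> b \<in> SO_set 2 \<and> c \<in> SO_set 2 \<and> X = bd 3 0 a * bd 3 1 b * bd 3 0 c"
proof -
  have s: "supp 3 {0..<Suc 2} X" by (auto simp: supp_def)
  obtain a b x where ab: "a \<in> SO_set 3" "supp 3 {0..<2} a" "b \<in> SO_set 3" "supp 3 {0..<2} b"
      "x \<in> SO_set 2" "X = a * bd 3 (2-1) x * b"
    using decomp[of 2 3 X] X s by auto
  have e2: "{0..<0+2} = {0..<(2::nat)}" by (simp only: add_0)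
  have s2: "supp 3 {0..<0+2} a" "supp 3 {0..<0+2} b" using ab unfolding e2 by auto
  obtain a' where a': "a' \<in> SO_set 2" "a = bd 3 0 a'" using supp_bd_SO[OF ab(1) s2(1)] by auto
  obtain b' where b': "b' \<in> SO_set 2" "b = bd 3 0 b'" using supp_bd_SO[OF ab(3) s2(2)] by auto
  show ?thesis using a' b' ab(5,6) by auto
qed




context group begin

lemma commute_inv: "v \<in> carrier G \<Longrightarrow> h \<in> carrier G \<Longrightarrow> v \<otimes> h = h \<otimes> v \<Longrightarrow> v \<otimes> inv h = inv h \<otimes> v"
proof -
  assume v: "v \<in> carrier G" and h: "h \<in> carrier G" and c: "v \<otimes> h = h \<otimes> v"
  have "inv h \<otimes> v = inv h \<otimes> (v \<otimes> h) \<otimes> inv h" using v h by (simp add: m_assoc)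
  also have "\<dots> = inv h \<otimes> (h \<otimes> v) \<otimes> inv h" using c by simp
  also have "\<dots> = v \<otimes> inv h" using v h by (simp add: m_assoc[symmetric])
  finally show ?thesis by simp
qed

lemma commute_generate:
  assumes v: "v \<in> carrier G" and S: "S \<subseteq> carrier G" and c: "\<forall>s\<in>S. v \<otimes> s = s \<otimes> v"
    and g: "g \<in> generate G S"
  shows "v \<otimes> g = g \<otimes> v"
  using g
proof induction
  case one thus ?case using v by simp
next
  case (incl h) thus ?case using c by simp
next
  case (inv h) thus ?case using commute_inv[OF v _ ] c S by auto
next
  case (eng h1 h2)
  have h: "h1 \<in> carrier G" "h2 \<in> carrier G" using eng.hyps generate_in_carrier[OF S] by auto
  have "v \<otimes> (h1 \<otimes> h2) = (v \<otimes> h1) \<otimes> h2" using v h by (simp add: m_assoc)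
  also have "\<dots> = h1 \<otimes> (v \<otimes> h2)" using eng.IH v h by (simp add: m_assoc)
  also have "\<dots> = h1 \<otimes> h2 \<otimes> v" using eng.IH v h by (simp add: m_assoc)
  finally show ?case .
qed

definition Gam :: "(nat \<Rightarrow> 'a set) \<Rightarrow> nat \<Rightarrow> 'a set" where
  "Gam W m = generate G (\<Union>k\<in>{1..<m}. W k)"

definition tri :: "'a set \<Rightarrow> 'a set \<Rightarrow> 'a set" where
  "tri A B = {a \<otimes> v \<otimes> b | a v b. a \<in> A \<and> v \<in> B \<and> b \<in> A}"

lemma from_key:
  assumes sub: "\<And>k. 1 \<le> k \<Longrightarrow> k \<le> N \<Longrightarrow> subgroup (W k) G"
    and m: "1 \<le> m" "m \<le> N"
    and key: "\<And>v v' c. v \<in> W m \<Longrightarrow> v' \<in> W m \<Longrightarrow> c \<in> Gam W m \<Longrightarrow> v \<otimes> c \<otimes> v' \<in> tri (Gam W m) (W m)"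
  shows "Gam W (Suc m) \<subseteq> tri (Gam W m) (W m)"
proof -
  have Ssub: "(\<Union>k\<in>{1..<m}. W k) \<subseteq> carrier G" using sub m subgroup.subset by fastforce
  have Gsub: "subgroup (Gam W m) G" unfolding Gam_def by (rule generate_is_subgroup[OF Ssub])
  have Wsub: "subgroup (W m) G" using sub m by auto
  note Gc = subgroup.mem_carrier[OF Gsub] and Wc = subgroup.mem_carrier[OF Wsub]
  have D: "subgroup (tri (Gam W m) (W m)) G"
  proof
    show "tri (Gam W m) (W m) \<subseteq> carrier G" unfolding tri_def using Gc Wc by auto
    show "\<one> \<in> tri (Gam W m) (W m)" unfolding tri_def
      using subgroup.one_closed[OF Gsub] subgroup.one_closed[OF Wsub] by force
  next
    fix x assume "x \<in> tri (Gam W m) (W m)"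
    then obtain a v b where x: "x = a \<otimes> v \<otimes> b" "a \<in> Gam W m" "v \<in> W m" "b \<in> Gam W m"
      unfolding tri_def by blast
    have "inv x = inv b \<otimes> inv v \<otimes> inv a" using x Gc Wc by (simp add: inv_mult_group m_assoc)
    moreover have "inv b \<in> Gam W m" "inv v \<in> W m" "inv a \<in> Gam W m"
      using x subgroup.m_inv_closed[OF Gsub] subgroup.m_inv_closed[OF Wsub] by auto
    ultimately show "inv x \<in> tri (Gam W m) (W m)" unfolding tri_def by blast
  next
    fix x y assume "x \<in> tri (Gam W m) (W m)" "y \<in> tri (Gam W m) (W m)"
    then obtain a v b a' v' b' where x: "x = a \<otimes> v \<otimes> b" "a \<in> Gam W m" "v \<in> W m" "b \<in> Gam W m"
      and y: "y = a' \<otimes> v' \<otimes> b'" "a' \<in> Gam W m" "v' \<in> W m" "b' \<in> Gam W m"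
      unfolding tri_def by blast
    have ba: "b \<otimes> a' \<in> Gam W m" using x y subgroup.m_closed[OF Gsub] by auto
    obtain a1 w b1 where k: "v \<otimes> (b \<otimes> a') \<otimes> v' = a1 \<otimes> w \<otimes> b1" "a1 \<in> Gam W m" "w \<in> W m" "b1 \<in> Gam W m"
      using key[OF x(3) y(3) ba] unfolding tri_def by blast
    have "x \<otimes> y = a \<otimes> (v \<otimes> (b \<otimes> a') \<otimes> v') \<otimes> b'"
      using x y Gc Wc by (simp add: m_assoc)
    also have "\<dots> = (a \<otimes> a1) \<otimes> w \<otimes> (b1 \<otimes> b')" unfolding k(1)
      using x y k Gc Wc by (simp add: m_assoc)
    finally show "x \<otimes> y \<in> tri (Gam W m) (W m)" unfolding tri_def
      using subgroup.m_closed[OF Gsub] x y k by blast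
  qed
  have gens: "(\<Union>k\<in>{1..<Suc m}. W k) \<subseteq> tri (Gam W m) (W m)"
  proof
    fix g assume "g \<in> (\<Union>k\<in>{1..<Suc m}. W k)"
    then obtain k where k: "1 \<le> k" "k < Suc m" "g \<in> W k" by auto
    show "g \<in> tri (Gam W m) (W m)"
    proof (cases "k = m")
      case True
      have "g = \<one> \<otimes> g \<otimes> \<one>" using k True Wc by simp
      thus ?thesis unfolding tri_def using k True subgroup.one_closed[OF Gsub] by blast
    next
      case False
      hence "g \<in> Gam W m" unfolding Gam_def using k by (intro generate.incl) auto
      moreover have "g = g \<otimes> \<one> \<otimes> \<one>" using Gc[OF \<open>g \<in> Gam W m\<close>] by simp
      ultimately show ?thesis unfolding tri_def using subgroup.one_closed[OF Gsub]
          subgroup.one_closed[OF Wsub] by blast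
    qed
  qed
  show ?thesis unfolding Gam_def[of W "Suc m"] by (rule generate_subgroup_incl[OF gens D])
qed

lemma Gam_mono: "m \<le> m' \<Longrightarrow> Gam W m \<subseteq> Gam W m'"
  unfolding Gam_def by (rule mono_generate, rule UN_mono) auto

lemma W_in_Gam: "1 \<le> k \<Longrightarrow> k < m \<Longrightarrow> W k \<subseteq> Gam W m"
  unfolding Gam_def by (intro subsetI generate.incl) auto

lemma tri_decomp:
  assumes sub: "\<And>k. 1 \<le> k \<Longrightarrow> k \<le> N \<Longrightarrow> subgroup (W k) G"
    and comm: "\<And>k l u v. 1 \<le> l \<Longrightarrow> l + 2 \<le> k \<Longrightarrow> k \<le> N \<Longrightarrow> u \<in> W l \<Longrightarrow> v \<in> W k \<Longrightarrow> u \<otimes> v = v \<otimes> u"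
    and braid: "\<And>k x y z. 2 \<le> k \<Longrightarrow> k \<le> N \<Longrightarrow> x \<in> W k \<Longrightarrow> y \<in> W (k-1) \<Longrightarrow> z \<in> W k \<Longrightarrow>
        \<exists>a b c. a \<in> W (k-1) \<and> b \<in> W k \<and> c \<in> W (k-1) \<and> x \<otimes> y \<otimes> z = a \<otimes> b \<otimes> c"
    and m: "1 \<le> m" "m \<le> N"
  shows "Gam W (Suc m) \<subseteq> tri (Gam W m) (W m)"
  using m
proof (induction m rule: nat_induct_at_least)
  case base
  show ?case
  proof (rule from_key[OF sub _ base])
    fix v v' c assume v: "v \<in> W 1" "v' \<in> W 1" and c: "c \<in> Gam W 1"
    have Wsub: "subgroup (W 1) G" using sub base by auto
    have "c = \<one>" using c generate_empty unfolding Gam_def by auto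
    hence "v \<otimes> c \<otimes> v' = \<one> \<otimes> (v \<otimes> v') \<otimes> \<one>" using v subgroup.mem_carrier[OF Wsub] by simp
    moreover have "\<one> \<in> Gam W 1" unfolding Gam_def by (rule generate.one)
    ultimately show "v \<otimes> c \<otimes> v' \<in> tri (Gam W 1) (W 1)" unfolding tri_def
      using v subgroup.m_closed[OF Wsub] by blast
  qed auto
next
  case (Suc m)
  show ?case
  proof (rule from_key[OF sub])
    fix v v' c assume v: "v \<in> W (Suc m)" "v' \<in> W (Suc m)" and c: "c \<in> Gam W (Suc m)"
    have Wsub: "\<And>k. 1 \<le> k \<Longrightarrow> k \<le> N \<Longrightarrow> subgroup (W k) G" using sub by auto
    note Wc = subgroup.mem_carrier[OF Wsub]
    have Ssub: "(\<Union>k\<in>{1..<m}. W k) \<subseteq> carrier G" using sub Suc subgroup.subset by fastforce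
    have Gsub: "\<And>m'. m' \<le> Suc N \<Longrightarrow> subgroup (Gam W m') G" unfolding Gam_def
      by (rule generate_is_subgroup) (use sub subgroup.subset in fastforce)
    note Gc = subgroup.mem_carrier[OF Gsub]
    obtain a u b where cd: "c = a \<otimes> u \<otimes> b" "a \<in> Gam W m" "u \<in> W m" "b \<in> Gam W m"
      using Suc.IH Suc.prems c unfolding tri_def by auto
    have vc: "v \<in> carrier G" "v' \<in> carrier G" "u \<in> carrier G" "a \<in> carrier G" "b \<in> carrier G"
      using v cd Suc Wc[of "Suc m"] Wc[of m] Gc[of m] by auto
    have com: "\<And>w g. w \<in> W (Suc m) \<Longrightarrow> g \<in> Gam W m \<Longrightarrow> w \<otimes> g = g \<otimes> w"
    proof -
      fix w g assume w: "w \<in> W (Suc m)" and g: "g \<in> Gam W m"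
      show "w \<otimes> g = g \<otimes> w"
      proof (rule commute_generate[OF _ Ssub])
        show "w \<in> carrier G" using Wc[of "Suc m"] w Suc by auto
        show "g \<in> generate G (\<Union>k\<in>{1..<m}. W k)" using g unfolding Gam_def .
        show "\<forall>s\<in>\<Union>k\<in>{1..<m}. W k. w \<otimes> s = s \<otimes> w"
          using comm[of _ "Suc m"] Suc w by fastforce
      qed
    qed
    obtain a1 w b1 where br: "a1 \<in> W m" "w \<in> W (Suc m)" "b1 \<in> W m" "v \<otimes> u \<otimes> v' = a1 \<otimes> w \<otimes> b1"
      using braid[of "Suc m" v u v'] v cd Suc by auto
    have a1c: "a1 \<in> carrier G" "b1 \<in> carrier G" "w \<in> carrier G"
      using br Suc Wc[of m] Wc[of "Suc m"] by auto
    have "v \<otimes> c \<otimes> v' = (v \<otimes> a) \<otimes> u \<otimes> (b \<otimes> v')" using vc cd by (simp add: m_assoc)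
    also have "\<dots> = (a \<otimes> v) \<otimes> u \<otimes> (v' \<otimes> b)" using com v cd by simp
    also have "\<dots> = a \<otimes> (v \<otimes> u \<otimes> v') \<otimes> b" using vc by (simp add: m_assoc)
    also have "\<dots> = (a \<otimes> a1) \<otimes> w \<otimes> (b1 \<otimes> b)" unfolding br(4) using vc a1c by (simp add: m_assoc)
    finally have eq: "v \<otimes> c \<otimes> v' = (a \<otimes> a1) \<otimes> w \<otimes> (b1 \<otimes> b)" .
    have "a \<otimes> a1 \<in> Gam W (Suc m)" "b1 \<otimes> b \<in> Gam W (Suc m)"
      using subgroup.m_closed[OF Gsub[of "Suc m"]] Gam_mono[of m "Suc m" W] W_in_Gam[of m "Suc m" W]
        cd br Suc by auto
    thus "v \<otimes> c \<otimes> v' \<in> tri (Gam W (Suc m)) (W (Suc m))" unfolding tri_def eq using br by blast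
  qed (use Suc in auto)
qed

end




lemma phi_lo: "x \<in> carrier_mat 2 2 \<Longrightarrow> phi_adj_lo x = bd 3 0 x"
  using eps2[of x 3 0] by (simp add: phi_adj_lo_def numeral_2_eq_2)

lemma phi_hi: "x \<in> carrier_mat 2 2 \<Longrightarrow> phi_adj_hi x = bd 3 1 x"
  using eps2[of x 3 1] by (simp add: phi_adj_hi_def numeral_2_eq_2 numeral_3_eq_3)

lemma tauA_bd: "1 \<le> i \<Longrightarrow> X \<in> carrier_mat 3 3 \<Longrightarrow> tauA n i X = bd n (i-1) X"
  using eps3[of X n "i-1"] by (simp add: tauA_def)

lemma tauF_bd: "1 \<le> i \<Longrightarrow> 1 \<le> j \<Longrightarrow> tauF n i j (x,y) = eps n {i, i+1} x * eps n {j, j+1} y"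
  by (simp add: tauF_def)

lemma eps2': "1 \<le> i \<Longrightarrow> x \<in> carrier_mat 2 2 \<Longrightarrow> eps n {i, Suc i} x = bd n (i-1) x"
  using eps2[of x n "i-1"] by simp

lemma bd_bd_hi': "1 \<le> i \<Longrightarrow> x \<in> carrier_mat 2 2 \<Longrightarrow> bd n (i - Suc 0) (bd 3 (Suc 0) x) = bd n i x"
  using bd_bd_hi[of x n "i - 1"] by simp

lemma assoc4: "A \<in> carrier_mat n n \<Longrightarrow> B \<in> carrier_mat n n \<Longrightarrow> C \<in> carrier_mat n n \<Longrightarrow> D \<in> carrier_mat n n \<Longrightarrow>
  A * B * (C * D) = A * (B * C) * (D :: real mat)"
proof -
  assume c: "A \<in> carrier_mat n n" "B \<in> carrier_mat n n" "C \<in> carrier_mat n n" "D \<in> carrier_mat n n"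
  have "A * B * (C * D) = A * (B * (C * D))" using c by (intro assoc_mult_mat) auto
  also have "B * (C * D) = B * C * D" using c by (intro assoc_mult_mat[symmetric]) auto
  also have "A * (B * C * D) = A * (B * C) * D" using c by (intro assoc_mult_mat[symmetric]) auto
  finally show ?thesis .
qed

lemma SO_set_carrier2: "x \<in> SO_set 2 \<Longrightarrow> x \<in> carrier_mat 2 2" using SO_D(1) .

lemma vmap_SO:
  assumes n: "3 \<le> n" and i: "i \<in> {1..n-1}" and j: "j \<in> {1..n-1}" and ij: "i \<noteq> j"
    and x: "x \<in> SO_set 2"
  shows "vmap (tauA n) (tauF n) i j x = bd n (j-1) x"
proof -
  have xc: "x \<in> carrier_mat 2 2" using SO_D(1)[OF x] .
  have c3: "bd 3 1 x \<in> carrier_mat 3 3" "bd 3 0 x \<in> carrier_mat 3 3" by auto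
  show ?thesis
  proof (cases "j = i + 1")
    case True
    thus ?thesis using i xc c3 by (simp add: vmap_def phi_hi tauA_bd bd_bd_hi')
  next
    case F1: False
    show ?thesis
    proof (cases "i = j + 1")
      case True
      thus ?thesis using j xc c3 F1 by (simp add: vmap_def phi_lo tauA_bd bd_bd_lo)
    next
      case F2: False
      show ?thesis
      proof (cases "i < j")
        case True
        thus ?thesis using i j xc F1 F2
          by (simp add: vmap_def phi_far_hi_def tauF_def eps2' bd_one)
      next
        case False
        thus ?thesis using i j xc F1 F2
          by (simp add: vmap_def phi_far_lo_def tauF_def eps2' bd_one)
      qed
    qed
  qed
qed

lemma tauA_hom: assumes "adj_pair n i" shows "tauA n i \<in> hom G_adj (SO_grp n)"
proof (rule homI)
  have i: "1 \<le> i" "i - 1 + 3 \<le> n" using assms by (auto simp: adj_pair_def)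
  fix X Y assume X: "X \<in> carrier G_adj" and Y: "Y \<in> carrier G_adj"
  have Xc: "X \<in> carrier_mat 3 3" "Y \<in> carrier_mat 3 3" using X Y SO_D(1) by auto
  show "tauA n i (X \<otimes>\<^bsub>G_adj\<^esub> Y) = tauA n i X \<otimes>\<^bsub>SO_grp n\<^esub> tauA n i Y"
    using Xc i by (simp add: tauA_bd bd_mult)
next
  have i: "1 \<le> i" "i - 1 + 3 \<le> n" using assms by (auto simp: adj_pair_def)
  fix X assume X: "X \<in> carrier G_adj"
  thus "tauA n i X \<in> carrier (SO_grp n)" using i bd_SO[of X 3 "i-1" n] SO_D(1)[of X 3]
    by (simp add: tauA_bd)
qed

lemma tauF_hom: assumes "far_pair n i j" shows "tauF n i j \<in> hom G_far (SO_grp n)"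
proof -
  have ij: "1 \<le> i" "i + 2 \<le> j" "j + 1 \<le> n" using assms by (auto simp: far_pair_def)
  have tf: "\<And>x y. x \<in> SO_set 2 \<Longrightarrow> y \<in> SO_set 2 \<Longrightarrow> tauF n i j (x,y) = bd n (i-1) x * bd n (j-1) y"
    using ij by (simp add: tauF_def eps2' SO_D(1))
  have com: "\<And>x y. x \<in> carrier_mat 2 2 \<Longrightarrow> y \<in> carrier_mat 2 2 \<Longrightarrow> bd n (i-1) x * bd n (j-1) y = bd n (j-1) y * bd n (i-1) x"
  proof -
    fix x y :: "real mat" assume x: "x \<in> carrier_mat 2 2" and y: "y \<in> carrier_mat 2 2"
    show "bd n (i-1) x * bd n (j-1) y = bd n (j-1) y * bd n (i-1) x"
      by (rule supp_commute[OF bd_carrier bd_carrier supp_bd[OF x] supp_bd[OF y]]) (use ij in auto)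
  qed
  show ?thesis
  proof (rule homI)
    fix p assume "p \<in> carrier G_far"
    then obtain x y where p: "p = (x,y)" "x \<in> SO_set 2" "y \<in> SO_set 2" by (auto simp: DirProd_def)
    show "tauF n i j p \<in> carrier (SO_grp n)" using p tf ij
      by (simp add: SO_mult bd_SO)
  next
    fix p q assume "p \<in> carrier G_far" "q \<in> carrier G_far"
    then obtain x y x' y' where p: "p = (x,y)" "x \<in> SO_set 2" "y \<in> SO_set 2"
      and q: "q = (x',y')" "x' \<in> SO_set 2" "y' \<in> SO_set 2" by (auto simp: DirProd_def)
    have c: "x \<in> carrier_mat 2 2" "y \<in> carrier_mat 2 2" "x' \<in> carrier_mat 2 2" "y' \<in> carrier_mat 2 2"
      using p q SO_D(1) by auto
    have "tauF n i j (p \<otimes>\<^bsub>G_far\<^esub> q) = bd n (i-1) (x * x') * bd n (j-1) (y * y')"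
      using p q tf SO_mult by simp
    also have "\<dots> = bd n (i-1) x * (bd n (i-1) x' * bd n (j-1) y) * bd n (j-1) y'"
      using c ij by (simp add: bd_mult[symmetric], intro assoc4) auto
    also have "\<dots> = bd n (i-1) x * (bd n (j-1) y * bd n (i-1) x') * bd n (j-1) y'"
      using com c by simp
    also have "\<dots> = tauF n i j p \<otimes>\<^bsub>SO_grp n\<^esub> tauF n i j q"
      using c p q tf by (simp, intro assoc4[symmetric]) auto
    finally show "tauF n i j (p \<otimes>\<^bsub>G_far\<^esub> q) = tauF n i j p \<otimes>\<^bsub>SO_grp n\<^esub> tauF n i j q" .
  qed
qed

definition gensSO :: "nat \<Rightarrow> real mat set" where
  "gensSO n = (\<Union>i\<in>{i. adj_pair n i}. tauA n i ` carrier G_adj) \<union>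
                 (\<Union>(i,j)\<in>{(i,j). far_pair n i j}. tauF n i j ` carrier G_far)"

lemma gensSO_sub: "gensSO n \<subseteq> SO_set n"
  unfolding gensSO_def using tauA_hom tauF_hom by (fastforce dest: hom_in_carrier)

lemma generate_SO: assumes n: "3 \<le> n" shows "generate (SO_grp n) (gensSO n) = SO_set n"
proof
  show "generate (SO_grp n) (gensSO n) \<subseteq> SO_set n"
    using group.generate_incl[OF group_SO, of "gensSO n" n] gensSO_sub by simp
  show "SO_set n \<subseteq> generate (SO_grp n) (gensSO n)"
  proof
    fix g assume g: "g \<in> SO_set n"
    show "g \<in> generate (SO_grp n) (gensSO n)"
    proof (rule SO_induct[OF _ _ _ _ g])
      show "1 \<le> n" using n by simp
      show "1\<^sub>m n \<in> generate (SO_grp n) (gensSO n)" using generate.one[of "SO_grp n"] by simp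
      fix a b assume "a \<in> generate (SO_grp n) (gensSO n)" "b \<in> generate (SO_grp n) (gensSO n)"
      thus "a * b \<in> generate (SO_grp n) (gensSO n)" using generate.eng[of a "SO_grp n"] by simp
    next
      fix k x assume k: "Suc (Suc k) \<le> n" and x: "x \<in> SO_set 2"
      have xc: "x \<in> carrier_mat 2 2" using SO_D(1)[OF x] .
      show "bd n k x \<in> generate (SO_grp n) (gensSO n)"
      proof (rule generate.incl)
        show "bd n k x \<in> gensSO n"
        proof (cases "k + 3 \<le> n")
          case True
          have a: "adj_pair n (k+1)" using True by (simp add: adj_pair_def)
          have "bd 3 0 x \<in> SO_set 3" using bd_SO[OF x] by simp
          moreover have "bd n k x = tauA n (k+1) (bd 3 0 x)" using xc by (simp add: tauA_bd bd_bd_lo)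
          ultimately show ?thesis unfolding gensSO_def using a by auto
        next
          case False
          hence kk: "k + 2 = n" "1 \<le> k" using k n by auto
          have a: "adj_pair n k" using kk by (simp add: adj_pair_def)
          have "bd 3 1 x \<in> SO_set 3" using bd_SO[OF x] by simp
          moreover have "bd n k x = tauA n k (bd 3 1 x)" using xc kk by (simp add: tauA_bd bd_bd_hi')
          ultimately show ?thesis unfolding gensSO_def using a by auto
        qed
      qed
    qed
  qed
qed

lemma env_SO: assumes n: "3 \<le> n" shows "enveloping n (SO_grp n) (tauA n) (tauF n)"
  unfolding enveloping_def
proof (intro conjI allI impI ballI)
  show "group (SO_grp n)" by (rule group_SO)
  show "\<And>i. adj_pair n i \<Longrightarrow> tauA n i \<in> hom G_adj (SO_grp n)" by (rule tauA_hom)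
  show "\<And>i j. far_pair n i j \<Longrightarrow> tauF n i j \<in> hom G_far (SO_grp n)" by (rule tauF_hom)
  show "generate (SO_grp n) ((\<Union>i\<in>{i. adj_pair n i}. tauA n i ` carrier G_adj) \<union>
       (\<Union>(i,j)\<in>{(i,j). far_pair n i j}. tauF n i j ` carrier G_far)) = carrier (SO_grp n)"
    using generate_SO[OF n] unfolding gensSO_def by simp
  fix i j k x assume i: "i \<in> {1..n-1}" and j: "j \<in> {1..n-1}" and k: "k \<in> {1..n-1}"
    and d: "i \<noteq> j \<and> j \<noteq> k \<and> i \<noteq> k" and x: "x \<in> carrier (SO_grp 2)"
  show "vmap (tauA n) (tauF n) i j x = vmap (tauA n) (tauF n) k j x"
    using vmap_SO[OF n i j _ ] vmap_SO[OF n k j _] d x by simp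
qed




lemma group_homI: "group G \<Longrightarrow> group K \<Longrightarrow> h \<in> hom G K \<Longrightarrow> group_hom G K h"
  by (simp add: group_hom_def group_hom_axioms_def)

locale env_ctx =
  fixes n :: nat and H :: "('b, 'z) monoid_scheme" and sA sF
  assumes n3: "3 \<le> n" and env: "enveloping n H sA sF"
begin

lemma grpH: "group H" using env by (simp add: enveloping_def)
lemma sA_hom: "adj_pair n i \<Longrightarrow> sA i \<in> hom G_adj H" using env by (simp add: enveloping_def)
lemma sF_hom: "far_pair n i j \<Longrightarrow> sF i j \<in> hom G_far H" using env by (simp add: enveloping_def)
lemma genH: "generate H ((\<Union>i\<in>{i. adj_pair n i}. sA i ` carrier G_adj) \<union>
                 (\<Union>(i,j)\<in>{(i,j). far_pair n i j}. sF i j ` carrier G_far)) = carrier H"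
  using env by (simp add: enveloping_def)
lemma compat: "i \<in> {1..n-1} \<Longrightarrow> j \<in> {1..n-1} \<Longrightarrow> k \<in> {1..n-1} \<Longrightarrow> i \<noteq> j \<Longrightarrow> j \<noteq> k \<Longrightarrow> i \<noteq> k \<Longrightarrow>
   x \<in> SO_set 2 \<Longrightarrow> vmap sA sF i j x = vmap sA sF k j x"
  using env unfolding enveloping_def by (metis SO_grp_simps(1))

definition nb :: "nat \<Rightarrow> nat" where "nb k = (if k + 2 \<le> n then k + 1 else k - 1)"
definition sig :: "nat \<Rightarrow> real mat \<Rightarrow> 'b" where "sig k x = vmap sA sF (nb k) k x"

lemma sig_eq: assumes "i \<in> {1..n-1}" "k \<in> {1..n-1}" "i \<noteq> k" "x \<in> SO_set 2"
  shows "vmap sA sF i k x = sig k x"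
proof (cases "i = nb k")
  case True thus ?thesis by (simp add: sig_def)
next
  case False
  have "nb k \<in> {1..n-1}" "nb k \<noteq> k" using assms n3 by (auto simp: nb_def)
  thus ?thesis using compat[of i k "nb k" x] assms False by (simp add: sig_def)
qed

lemma sig_lo: assumes "1 \<le> k" "k + 2 \<le> n" "x \<in> SO_set 2" shows "sig k x = sA k (bd 3 0 x)"
proof -
  have "vmap sA sF (k+1) k x = sA k (bd 3 0 x)"
    using assms by (simp add: vmap_def phi_lo SO_D(1))
  thus ?thesis using sig_eq[of "k+1" k x] assms by simp
qed

lemma sig_hi: assumes "2 \<le> k" "k + 1 \<le> n" "x \<in> SO_set 2" shows "sig k x = sA (k-1) (bd 3 1 x)"
proof -
  have "vmap sA sF (k-1) k x = sA (k-1) (bd 3 1 x)"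
    using assms by (simp add: vmap_def phi_hi SO_D(1))
  moreover have "k - 1 \<in> {1..n-1}" "k \<in> {1..n-1}" "k - 1 \<noteq> k" using assms by auto
  ultimately show ?thesis using sig_eq[of "k-1" k x] assms by simp
qed

lemma sig_far_lo: assumes "far_pair n l k" "x \<in> SO_set 2" shows "sig l x = sF l k (x, 1\<^sub>m 2)"
proof -
  have "vmap sA sF k l x = sF l k (x, 1\<^sub>m 2)"
    using assms by (auto simp: vmap_def phi_far_lo_def far_pair_def)
  thus ?thesis using sig_eq[of k l x] assms by (auto simp: far_pair_def)
qed

lemma sig_far_hi: assumes "far_pair n l k" "y \<in> SO_set 2" shows "sig k y = sF l k (1\<^sub>m 2, y)"
proof -
  have "vmap sA sF l k y = sF l k (1\<^sub>m 2, y)"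
    using assms by (auto simp: vmap_def phi_far_hi_def far_pair_def)
  thus ?thesis using sig_eq[of l k y] assms by (auto simp: far_pair_def)
qed

lemma comp_hom: assumes f: "f \<in> hom G_adj H" and c: "c \<in> {0,1}"
  shows "(\<lambda>x. f (bd 3 c x)) \<in> hom (SO_grp 2) H"
proof (rule homI)
  fix x assume "x \<in> carrier (SO_grp 2)"
  hence "bd 3 c x \<in> carrier G_adj" using bd_SO c by auto
  thus "f (bd 3 c x) \<in> carrier H" using hom_in_carrier[OF f] by blast
next
  fix x y assume "x \<in> carrier (SO_grp 2)" "y \<in> carrier (SO_grp 2)"
  hence xy: "x \<in> SO_set 2" "y \<in> SO_set 2" by auto
  have "bd 3 c (x * y) = bd 3 c x * bd 3 c y" using bd_mult[OF SO_D(1)[OF xy(1)] SO_D(1)[OF xy(2)]] c by auto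
  moreover have "bd 3 c x \<in> carrier G_adj" "bd 3 c y \<in> carrier G_adj" using bd_SO xy c by auto
  ultimately show "f (bd 3 c (x \<otimes>\<^bsub>SO_grp 2\<^esub> y)) = f (bd 3 c x) \<otimes>\<^bsub>H\<^esub> f (bd 3 c y)"
    using hom_mult[OF f] by simp
qed

lemma sig_hom: assumes k: "1 \<le> k" "k + 1 \<le> n" shows "sig k \<in> hom (SO_grp 2) H"
proof (cases "k + 2 \<le> n")
  case True
  have "(\<lambda>x. sA k (bd 3 0 x)) \<in> hom (SO_grp 2) H"
    by (rule comp_hom[OF sA_hom]) (use k True in \<open>auto simp: adj_pair_def\<close>)
  moreover have "\<And>x. x \<in> carrier (SO_grp 2) \<Longrightarrow> sig k x = sA k (bd 3 0 x)" using sig_lo k True by auto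
  ultimately show ?thesis unfolding hom_def using SO_mult[of _ 2] by auto
next
  case False
  have "(\<lambda>x. sA (k-1) (bd 3 1 x)) \<in> hom (SO_grp 2) H"
    by (rule comp_hom[OF sA_hom]) (use k False n3 in \<open>auto simp: adj_pair_def\<close>)
  moreover have "\<And>x. x \<in> carrier (SO_grp 2) \<Longrightarrow> sig k x = sA (k-1) (bd 3 1 x)" using sig_hi k False n3 by auto
  ultimately show ?thesis unfolding hom_def using SO_mult[of _ 2] by auto
qed

abbreviation GH where "GH \<equiv> SO_grp n \<times>\<times> H"

lemma grpGH: "group GH" using DirProd_group[OF group_SO grpH] .

definition Phi :: "nat \<Rightarrow> real mat \<Rightarrow> real mat \<times> 'b" where "Phi k x = (bd n (k-1) x, sig k x)"
definition Vk :: "nat \<Rightarrow> (real mat \<times> 'b) set" where "Vk k = Phi k ` SO_set 2"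

lemma Phi_hom: assumes k: "1 \<le> k" "k + 1 \<le> n" shows "Phi k \<in> hom (SO_grp 2) GH"
proof (rule homI)
  fix x assume "x \<in> carrier (SO_grp 2)"
  thus "Phi k x \<in> carrier GH" using bd_SO[of x 2 "k-1" n] k hom_in_carrier[OF sig_hom[OF k]]
    by (auto simp: Phi_def)
next
  fix x y assume "x \<in> carrier (SO_grp 2)" "y \<in> carrier (SO_grp 2)"
  thus "Phi k (x \<otimes>\<^bsub>SO_grp 2\<^esub> y) = Phi k x \<otimes>\<^bsub>GH\<^esub> Phi k y"
    using hom_mult[OF sig_hom[OF k]] bd_mult[of x 2 y "k-1" n] k SO_D(1)
    by (auto simp: Phi_def)
qed

lemma Vk_sub: "1 \<le> k \<Longrightarrow> k \<le> n - 1 \<Longrightarrow> subgroup (Vk k) GH"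
  unfolding Vk_def using group_hom.img_is_subgroup[OF group_homI[OF group_SO grpGH Phi_hom]] n3 by auto

lemma Vk_carrier: "1 \<le> k \<Longrightarrow> k \<le> n - 1 \<Longrightarrow> Vk k \<subseteq> carrier GH"
  using subgroup.subset[OF Vk_sub] by auto

lemma Vk_comm: assumes l: "1 \<le> l" "l + 2 \<le> k" "k \<le> n - 1" and u: "u \<in> Vk l" and v: "v \<in> Vk k"
  shows "u \<otimes>\<^bsub>GH\<^esub> v = v \<otimes>\<^bsub>GH\<^esub> u"
proof -
  obtain x where x: "x \<in> SO_set 2" "u = Phi l x" using u by (auto simp: Vk_def)
  obtain y where y: "y \<in> SO_set 2" "v = Phi k y" using v by (auto simp: Vk_def)
  have fp: "far_pair n l k" using l by (simp add: far_pair_def)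
  have c1: "bd n (l-1) x * bd n (k-1) y = bd n (k-1) y * bd n (l-1) x"
    by (rule supp_commute[OF bd_carrier bd_carrier supp_bd[OF SO_D(1)[OF x(1)]] supp_bd[OF SO_D(1)[OF y(1)]]])
       (use l in auto)
  have xy: "(x, 1\<^sub>m 2) \<in> carrier G_far" "(1\<^sub>m 2, y) \<in> carrier G_far" using x y by auto
  have "sig l x \<otimes>\<^bsub>H\<^esub> sig k y = sF l k ((x, 1\<^sub>m 2) \<otimes>\<^bsub>G_far\<^esub> (1\<^sub>m 2, y))"
    using sig_far_lo[OF fp x(1)] sig_far_hi[OF fp y(1)] hom_mult[OF sF_hom[OF fp] xy] by simp
  also have "(x, 1\<^sub>m 2) \<otimes>\<^bsub>G_far\<^esub> (1\<^sub>m 2, y) = (1\<^sub>m 2, y) \<otimes>\<^bsub>G_far\<^esub> (x, 1\<^sub>m 2)"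
    using SO_D(1)[OF x(1)] SO_D(1)[OF y(1)] by auto
  also have "sF l k \<dots> = sig k y \<otimes>\<^bsub>H\<^esub> sig l x"
    using sig_far_lo[OF fp x(1)] sig_far_hi[OF fp y(1)] hom_mult[OF sF_hom[OF fp] xy(2) xy(1)] by simp
  finally show ?thesis using x y c1 by (simp add: Phi_def)
qed

definition Psi :: "nat \<Rightarrow> real mat \<Rightarrow> real mat \<times> 'b" where "Psi i X = (bd n (i-1) X, sA i X)"

lemma Psi_hom: assumes a: "adj_pair n i" shows "Psi i \<in> hom G_adj GH"
proof (rule homI)
  have i: "1 \<le> i" "i - 1 + 3 \<le> n" using a by (auto simp: adj_pair_def)
  fix X assume "X \<in> carrier G_adj"
  thus "Psi i X \<in> carrier GH" using bd_SO[of X 3 "i-1" n] i hom_in_carrier[OF sA_hom[OF a]]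
    by (auto simp: Psi_def)
next
  have i: "1 \<le> i" "i - 1 + 3 \<le> n" using a by (auto simp: adj_pair_def)
  fix X Y assume "X \<in> carrier G_adj" "Y \<in> carrier G_adj"
  thus "Psi i (X \<otimes>\<^bsub>G_adj\<^esub> Y) = Psi i X \<otimes>\<^bsub>GH\<^esub> Psi i Y"
    using hom_mult[OF sA_hom[OF a]] bd_mult[of X 3 Y "i-1" n] i SO_D(1)
    by (auto simp: Psi_def)
qed

lemma Psi_lo: assumes a: "adj_pair n i" and x: "x \<in> SO_set 2" shows "Psi i (bd 3 0 x) = Phi i x"
proof -
  have i: "1 \<le> i" "i + 2 \<le> n" using a by (auto simp: adj_pair_def)
  show ?thesis using sig_lo[OF i x] bd_bd_lo[OF SO_D(1)[OF x]] by (simp add: Psi_def Phi_def)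
qed

lemma Psi_hi: assumes a: "adj_pair n i" and x: "x \<in> SO_set 2" shows "Psi i (bd 3 1 x) = Phi (i+1) x"
proof -
  have i: "1 \<le> i" "i + 2 \<le> n" using a by (auto simp: adj_pair_def)
  have "sig (i+1) x = sA i (bd 3 1 x)" using sig_hi[of "i+1" x] i x by simp
  moreover have "bd n (i-1) (bd 3 1 x) = bd n i x" using bd_bd_hi[OF SO_D(1)[OF x], of n "i-1"] i by simp
  ultimately show ?thesis by (simp add: Psi_def Phi_def)
qed

lemma Psi_euler: assumes a: "adj_pair n i" and X: "X \<in> SO_set 3"
  shows "\<exists>a b c. a \<in> Vk i \<and> b \<in> Vk (i+1) \<and> c \<in> Vk i \<and> Psi i X = a \<otimes>\<^bsub>GH\<^esub> b \<otimes>\<^bsub>GH\<^esub> c"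
proof -
  obtain a b c where abc: "a \<in> SO_set 2" "b \<in> SO_set 2" "c \<in> SO_set 2"
    "X = bd 3 0 a * bd 3 1 b * bd 3 0 c" using euler3[OF X] by blast
  have m: "bd 3 0 a \<in> carrier G_adj" "bd 3 1 b \<in> carrier G_adj" "bd 3 0 c \<in> carrier G_adj"
    using abc bd_SO by auto
  have "Psi i X = Psi i (bd 3 0 a) \<otimes>\<^bsub>GH\<^esub> Psi i (bd 3 1 b) \<otimes>\<^bsub>GH\<^esub> Psi i (bd 3 0 c)"
    using hom_mult[OF Psi_hom[OF a]] m abc(4) SO_mult by (simp add: SO_mult)
  also have "\<dots> = Phi i a \<otimes>\<^bsub>GH\<^esub> Phi (i+1) b \<otimes>\<^bsub>GH\<^esub> Phi i c"
    using Psi_lo[OF a] Psi_hi[OF a] abc by simp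
  finally show ?thesis using abc unfolding Vk_def by blast
qed

end




context env_ctx begin

abbreviation Gm where "Gm m \<equiv> group.Gam GH Vk m"

lemma Union_sub: "m \<le> n \<Longrightarrow> (\<Union>k\<in>{1..<m}. Vk k) \<subseteq> carrier GH"
  using Vk_carrier by fastforce

lemma Gm_sub: "m \<le> n \<Longrightarrow> subgroup (Gm m) GH"
  unfolding group.Gam_def[OF grpGH] by (rule group.generate_is_subgroup[OF grpGH Union_sub])

lemma Gm_carrier: "m \<le> n \<Longrightarrow> Gm m \<subseteq> carrier GH"
  using subgroup.subset[OF Gm_sub] by auto

lemma braid_Vk: assumes k: "2 \<le> k" "k \<le> n - 1" and x: "x \<in> Vk k" and y: "y \<in> Vk (k-1)" and z: "z \<in> Vk k"
  shows "\<exists>a b c. a \<in> Vk (k-1) \<and> b \<in> Vk k \<and> c \<in> Vk (k-1) \<and> x \<otimes>\<^bsub>GH\<^esub> y \<otimes>\<^bsub>GH\<^esub> z = a \<otimes>\<^bsub>GH\<^esub> b \<otimes>\<^bsub>GH\<^esub> c"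
proof -
  define i where "i = k - 1"
  have a: "adj_pair n i" using k n3 by (auto simp: adj_pair_def i_def)
  have ki: "k = i + 1" using k by (simp add: i_def)
  obtain x' where x': "x' \<in> SO_set 2" "x = Phi k x'" using x by (auto simp: Vk_def)
  obtain y' where y': "y' \<in> SO_set 2" "y = Phi i y'" using y by (auto simp: Vk_def i_def)
  obtain z' where z': "z' \<in> SO_set 2" "z = Phi k z'" using z by (auto simp: Vk_def)
  have m: "bd 3 1 x' \<in> carrier G_adj" "bd 3 0 y' \<in> carrier G_adj" "bd 3 1 z' \<in> carrier G_adj"
    using x' y' z' bd_SO by auto
  define X where "X = bd 3 1 x' * bd 3 0 y' * bd 3 1 z'"
  have XS: "X \<in> SO_set 3" unfolding X_def using m SO_mult by auto
  have "x \<otimes>\<^bsub>GH\<^esub> y \<otimes>\<^bsub>GH\<^esub> z = Psi i (bd 3 1 x') \<otimes>\<^bsub>GH\<^esub> Psi i (bd 3 0 y') \<otimes>\<^bsub>GH\<^esub> Psi i (bd 3 1 z')"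
    using Psi_lo[OF a] Psi_hi[OF a] x' y' z' ki by simp
  also have "\<dots> = Psi i X"
    using hom_mult[OF Psi_hom[OF a]] m unfolding X_def by (simp add: SO_mult)
  finally have eq: "x \<otimes>\<^bsub>GH\<^esub> y \<otimes>\<^bsub>GH\<^esub> z = Psi i X" .
  obtain a' b' c' where abc: "a' \<in> Vk i" "b' \<in> Vk (i+1)" "c' \<in> Vk i"
    "Psi i X = a' \<otimes>\<^bsub>GH\<^esub> b' \<otimes>\<^bsub>GH\<^esub> c'" using Psi_euler[OF a XS] by blast
  have "Vk i = Vk (k-1)" "Vk (i+1) = Vk k" using ki i_def by simp_all
  thus ?thesis using abc eq by metis
qed

lemma decomp_Gm: assumes m: "1 \<le> m" "m \<le> n - 1"
  shows "Gm (Suc m) \<subseteq> group.tri GH (Gm m) (Vk m)"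
  apply (rule group.tri_decomp[OF grpGH, where N = "n-1" and W = Vk])
  apply (erule (1) Vk_sub)
  apply (erule (4) Vk_comm)
  apply (erule (4) braid_Vk)
  using m by auto

lemma supp_Gm: assumes m: "m \<le> n" shows "\<forall>g\<in>Gm m. supp n {0..<m} (fst g)"
proof -
  define S where "S = {g \<in> carrier GH. supp n {0..<m} (fst g)}"
  have "subgroup S GH"
  proof
    show "S \<subseteq> carrier GH" by (auto simp: S_def)
    show "\<one>\<^bsub>GH\<^esub> \<in> S" by (simp add: S_def monoid.one_closed[OF group.is_monoid[OF grpH]])
  next
    fix x y assume "x \<in> S" "y \<in> S"
    then obtain a b c d where x: "x = (a,b)" "a \<in> SO_set n" "b \<in> carrier H" "supp n {0..<m} a"
      and y: "y = (c,d)" "c \<in> SO_set n" "d \<in> carrier H" "supp n {0..<m} c"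
      unfolding S_def by auto
    have "x \<otimes>\<^bsub>GH\<^esub> y = (a * c, b \<otimes>\<^bsub>H\<^esub> d)" using x y by simp
    moreover have "b \<otimes>\<^bsub>H\<^esub> d \<in> carrier H" using monoid.m_closed[OF group.is_monoid[OF grpH]] x y by blast
    moreover have "supp n {0..<m} (a * c)" using supp_mult[OF SO_D(1)[OF x(2)] SO_D(1)[OF y(2)] x(4) y(4)] .
    ultimately show "x \<otimes>\<^bsub>GH\<^esub> y \<in> S" unfolding S_def using SO_mult[OF x(2) y(2)] by simp
  next
    fix x assume "x \<in> S"
    then obtain a b where x: "x = (a,b)" "a \<in> SO_set n" "b \<in> carrier H" "supp n {0..<m} a"
      unfolding S_def by auto
    have "inv\<^bsub>GH\<^esub> x = (transpose_mat a, inv\<^bsub>H\<^esub> b)"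
      using x inv_DirProd[OF group_SO grpH] SO_inv by simp
    thus "inv\<^bsub>GH\<^esub> x \<in> S" unfolding S_def using x SO_transpose supp_transpose[OF SO_D(1)]
        group.inv_closed[OF grpH] by auto
  qed
  moreover have "(\<Union>k\<in>{1..<m}. Vk k) \<subseteq> S"
  proof
    fix g assume "g \<in> (\<Union>k\<in>{1..<m}. Vk k)"
    then obtain k x where k: "1 \<le> k" "k < m" "x \<in> SO_set 2" "g = Phi k x" by (auto simp: Vk_def)
    have "k \<le> n - 1" using k m by simp
    hence "g \<in> carrier GH" using Vk_carrier[of k] k unfolding Vk_def by auto
    moreover have "supp n {0..<m} (bd n (k-1) x)"
      by (rule supp_mono[OF supp_bd[OF SO_D(1)[OF k(3)]]]) (use k in auto)
    ultimately show "g \<in> S" unfolding S_def using k by (simp add: Phi_def)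
  qed
  ultimately have "Gm m \<subseteq> S" unfolding group.Gam_def[OF grpGH]
    by (rule group.generate_subgroup_incl[OF grpGH, rotated])
  thus ?thesis by (auto simp: S_def)
qed

lemma kernel: assumes m: "1 \<le> m" "m \<le> n" shows "\<forall>h. (1\<^sub>m n, h) \<in> Gm m \<longrightarrow> h = \<one>\<^bsub>H\<^esub>"
  using m
proof (induction m rule: nat_induct_at_least)
  case base
  have "Gm 1 = {\<one>\<^bsub>GH\<^esub>}" unfolding group.Gam_def[OF grpGH]
    using group.generate_empty[OF grpGH] by simp
  thus ?case by simp
next
  case (Suc m)
  show ?case
  proof (intro allI impI)
    fix h assume h: "(1\<^sub>m n, h) \<in> Gm (Suc m)"
    have mm: "1 \<le> m" "m \<le> n - 1" "m < n" using Suc by auto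
    obtain a v b where d: "(1\<^sub>m n, h) = a \<otimes>\<^bsub>GH\<^esub> v \<otimes>\<^bsub>GH\<^esub> b" "a \<in> Gm m" "v \<in> Vk m" "b \<in> Gm m"
      using decomp_Gm[OF mm(1,2)] h unfolding group.tri_def[OF grpGH] by blast
    obtain x where x: "x \<in> SO_set 2" "v = Phi m x" using d(3) by (auto simp: Vk_def)
    have ac: "a \<in> carrier GH" "b \<in> carrier GH" using d Gm_carrier[of m] mm by auto
    have sa: "supp n {0..<m} (fst a)" "supp n {0..<m} (fst b)" using supp_Gm[of m] d mm by auto
    define a1 where "a1 = fst a"
    define b1 where "b1 = fst b"
    define \<rho> where "\<rho> = bd n (m-1) x"
    have a1: "a1 \<in> SO_set n" "b1 \<in> SO_set n" using ac by (auto simp: a1_def b1_def)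
    note da = SO_D[OF a1(1)] and db = SO_D[OF a1(2)]
    have eq1: "1\<^sub>m n = a1 * \<rho> * b1"
      using d(1) x unfolding a1_def b1_def \<rho>_def by (simp add: mult_DirProd' Phi_def)
    have rc: "\<rho> \<in> carrier_mat n n" by (simp add: \<rho>_def)
    have "transpose_mat a1 * (1\<^sub>m n) * transpose_mat b1 = (transpose_mat a1 * a1) * \<rho> * (b1 * transpose_mat b1)"
      unfolding eq1 using da(1) db(1) rc
      by (simp add: assoc_mult_mat[of _ n n _ n _ n])
    hence r: "\<rho> = transpose_mat a1 * transpose_mat b1" using da db rc by simp
    have sr: "supp n {0..<m} \<rho>" unfolding r
      by (rule supp_mult[OF _ _ supp_transpose[OF da(1)] supp_transpose[OF db(1)]])
         (use sa da(1) db(1) in \<open>auto simp: a1_def b1_def\<close>)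
    have "\<rho> $$ (m-1, m) = 0" "\<rho> $$ (m, m) = 1" using sr mm by (auto simp: supp_def)
    moreover have "\<rho> $$ (m-1, m) = x $$ (0,1)" "\<rho> $$ (m, m) = x $$ (1,1)"
      unfolding \<rho>_def bd_def using mm SO_D(1)[OF x(1)] by auto
    ultimately have "x $$ (0,1) = 0" "x $$ (1,1) = 1" by simp_all
    hence x1: "x = 1\<^sub>m 2" using SO2_triv[OF x(1)] by simp
    have "v = \<one>\<^bsub>GH\<^esub>"
      using group_hom.hom_one[OF group_homI[OF group_SO grpGH Phi_hom]] mm x x1 by simp
    hence "(1\<^sub>m n, h) = a \<otimes>\<^bsub>GH\<^esub> \<one>\<^bsub>GH\<^esub> \<otimes>\<^bsub>GH\<^esub> b" using d(1) by (simp only:)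
    also have "a \<otimes>\<^bsub>GH\<^esub> \<one>\<^bsub>GH\<^esub> = a" using ac(1) by (rule monoid.r_one[OF group.is_monoid[OF grpGH]])
    finally have "(1\<^sub>m n, h) = a \<otimes>\<^bsub>GH\<^esub> b" .
    moreover have "a \<otimes>\<^bsub>GH\<^esub> b \<in> Gm m" using subgroup.m_closed[OF Gm_sub] d mm by auto
    ultimately have "(1\<^sub>m n, h) \<in> Gm m" by simp
    thus "h = \<one>\<^bsub>H\<^esub>" using Suc.IH mm(3) by simp
  qed
qed

end




context env_ctx begin

lemma Gn_sub: "subgroup (Gm n) GH" by (rule Gm_sub) simp

lemma Phi_in: "1 \<le> k \<Longrightarrow> k \<le> n - 1 \<Longrightarrow> x \<in> SO_set 2 \<Longrightarrow> Phi k x \<in> Gm n"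
proof -
  assume k: "1 \<le> k" "k \<le> n - 1" and x: "x \<in> SO_set 2"
  have "k < n" using k n3 by simp
  thus ?thesis using group.W_in_Gam[OF grpGH, of k n Vk] k x by (auto simp: Vk_def)
qed

lemma Vk_in: "1 \<le> k \<Longrightarrow> k \<le> n - 1 \<Longrightarrow> v \<in> Vk k \<Longrightarrow> v \<in> Gm n"
  using Phi_in by (auto simp: Vk_def)

lemma fst_surj: assumes g: "g \<in> SO_set n" shows "\<exists>h. (g,h) \<in> Gm n"
proof (rule SO_induct[OF _ _ _ _ g])
  show "1 \<le> n" using n3 by simp
  show "\<exists>h. (1\<^sub>m n, h) \<in> Gm n"
    using subgroup.one_closed[OF Gn_sub] by auto
next
  fix a b assume "\<exists>h. (a, h) \<in> Gm n" "\<exists>h. (b, h) \<in> Gm n"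
  then obtain h1 h2 where "(a,h1) \<in> Gm n" "(b,h2) \<in> Gm n" by blast
  hence "(a,h1) \<otimes>\<^bsub>GH\<^esub> (b,h2) \<in> Gm n" using subgroup.m_closed[OF Gn_sub] by blast
  thus "\<exists>h. (a * b, h) \<in> Gm n" by auto
next
  fix k x assume k: "Suc (Suc k) \<le> n" and x: "x \<in> SO_set 2"
  have "Phi (k+1) x \<in> Gm n" using Phi_in[of "k+1" x] k x by simp
  thus "\<exists>h. (bd n k x, h) \<in> Gm n" by (auto simp: Phi_def)
qed

lemma uniq: assumes a: "(g,h) \<in> Gm n" and b: "(g,h') \<in> Gm n" shows "h = h'"
proof -
  have c: "g \<in> SO_set n" "h \<in> carrier H" "h' \<in> carrier H" using a b Gm_carrier[of n] by auto
  have "(g,h) \<otimes>\<^bsub>GH\<^esub> inv\<^bsub>GH\<^esub> (g,h') \<in> Gm n"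
    using a b subgroup.m_closed[OF Gn_sub] subgroup.m_inv_closed[OF Gn_sub] by blast
  moreover have "(g,h) \<otimes>\<^bsub>GH\<^esub> inv\<^bsub>GH\<^esub> (g,h') = (1\<^sub>m n, h \<otimes>\<^bsub>H\<^esub> inv\<^bsub>H\<^esub> h')"
    using c inv_DirProd[OF group_SO grpH] group.r_inv[OF group_SO, of g n] by simp
  ultimately have "h \<otimes>\<^bsub>H\<^esub> inv\<^bsub>H\<^esub> h' = \<one>\<^bsub>H\<^esub>" using kernel[of n] n3 by auto
  thus ?thesis using c group.inv_equality[OF grpH, of h "inv\<^bsub>H\<^esub> h'"] group.inv_inv[OF grpH] group.inv_closed[OF grpH]
    by auto
qed

definition pm :: "real mat \<Rightarrow> 'b" where "pm g = (THE h. (g,h) \<in> Gm n)"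

lemma pm_eq: "(g,h) \<in> Gm n \<Longrightarrow> pm g = h"
  unfolding pm_def using uniq by blast

lemma pm_spec: "g \<in> SO_set n \<Longrightarrow> (g, pm g) \<in> Gm n"
  using fst_surj pm_eq by blast

lemma pm_hom: "pm \<in> hom (SO_grp n) H"
proof (rule homI)
  fix g assume "g \<in> carrier (SO_grp n)"
  thus "pm g \<in> carrier H" using pm_spec Gm_carrier[of n] by fastforce
next
  fix g g' assume "g \<in> carrier (SO_grp n)" "g' \<in> carrier (SO_grp n)"
  hence "(g, pm g) \<otimes>\<^bsub>GH\<^esub> (g', pm g') \<in> Gm n" using pm_spec subgroup.m_closed[OF Gn_sub] by auto
  thus "pm (g \<otimes>\<^bsub>SO_grp n\<^esub> g') = pm g \<otimes>\<^bsub>H\<^esub> pm g'" using pm_eq by simp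
qed

lemma pm_tauA: assumes a: "adj_pair n i" and X: "X \<in> SO_set 3" shows "pm (tauA n i X) = sA i X"
proof -
  obtain u v w where uvw: "u \<in> Vk i" "v \<in> Vk (i+1)" "w \<in> Vk i" "Psi i X = u \<otimes>\<^bsub>GH\<^esub> v \<otimes>\<^bsub>GH\<^esub> w"
    using Psi_euler[OF a X] by blast
  have i: "1 \<le> i" "i + 1 \<le> n - 1" using a by (auto simp: adj_pair_def)
  have "u \<in> Gm n" "v \<in> Gm n" "w \<in> Gm n"
    using Vk_in[of i u] Vk_in[of "i+1" v] Vk_in[of i w] uvw i by auto
  hence "Psi i X \<in> Gm n" using uvw(4) subgroup.m_closed[OF Gn_sub] by metis
  thus ?thesis using pm_eq tauA_bd[OF i(1) SO_D(1)[OF X]] by (simp add: Psi_def)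
qed

lemma pm_tauF: assumes f: "far_pair n i j" and p: "pr \<in> carrier G_far" shows "pm (tauF n i j pr) = sF i j pr"
proof -
  obtain x y where xy: "pr = (x,y)" "x \<in> SO_set 2" "y \<in> SO_set 2" using p by auto
  have ij: "1 \<le> i" "i \<le> n - 1" "1 \<le> j" "j \<le> n - 1" using f by (auto simp: far_pair_def)
  have c: "(x, 1\<^sub>m 2) \<in> carrier G_far" "(1\<^sub>m 2, y) \<in> carrier G_far" using xy by auto
  have "sF i j (x,y) = sF i j ((x, 1\<^sub>m 2) \<otimes>\<^bsub>G_far\<^esub> (1\<^sub>m 2, y))"
    using SO_D(1)[OF xy(2)] SO_D(1)[OF xy(3)] by simp
  also have "\<dots> = sig i x \<otimes>\<^bsub>H\<^esub> sig j y"
    using hom_mult[OF sF_hom[OF f] c] sig_far_lo[OF f xy(2)] sig_far_hi[OF f xy(3)] by simp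
  finally have "(tauF n i j pr, sF i j pr) = Phi i x \<otimes>\<^bsub>GH\<^esub> Phi j y"
    using xy ij by (simp add: Phi_def tauF_def eps2' SO_D(1))
  moreover have "Phi i x \<otimes>\<^bsub>GH\<^esub> Phi j y \<in> Gm n"
    using Phi_in ij xy subgroup.m_closed[OF Gn_sub] by auto
  ultimately show ?thesis using pm_eq by metis
qed

lemma gh_pm: "group_hom (SO_grp n) H pm" by (rule group_homI[OF group_SO grpH pm_hom])

lemma gens_img:
  assumes h: "h \<in> (\<Union>i\<in>{i. adj_pair n i}. sA i ` carrier G_adj) \<union>
                 (\<Union>(i,j)\<in>{(i,j). far_pair n i j}. sF i j ` carrier G_far)"
  shows "\<exists>g\<in>carrier (SO_grp n). h = pm g"
proof (cases "h \<in> (\<Union>i\<in>{i. adj_pair n i}. sA i ` carrier G_adj)")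
  case True
  then obtain i X where iX: "adj_pair n i" "X \<in> carrier G_adj" "h = sA i X" by blast
  have "tauA n i X \<in> carrier (SO_grp n)" using hom_in_carrier[OF tauA_hom[OF iX(1)] iX(2)] .
  moreover have "h = pm (tauA n i X)" using pm_tauA[OF iX(1)] iX by simp
  ultimately show ?thesis by blast
next
  case False
  then obtain i j pr where iX: "far_pair n i j" "pr \<in> carrier G_far" "h = sF i j pr" using h by blast
  have "tauF n i j pr \<in> carrier (SO_grp n)" using hom_in_carrier[OF tauF_hom[OF iX(1)] iX(2)] .
  moreover have "h = pm (tauF n i j pr)" using pm_tauF[OF iX(1,2)] iX by simp
  ultimately show ?thesis by blast
qed

lemma pm_surj: "pm ` carrier (SO_grp n) = carrier H"
proof
  show "pm ` carrier (SO_grp n) \<subseteq> carrier H" using hom_in_carrier[OF pm_hom] by auto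
  show "carrier H \<subseteq> pm ` carrier (SO_grp n)"
  proof
    fix h assume "h \<in> carrier H"
    hence "h \<in> generate H ((\<Union>i\<in>{i. adj_pair n i}. sA i ` carrier G_adj) \<union>
                 (\<Union>(i,j)\<in>{(i,j). far_pair n i j}. sF i j ` carrier G_far))" using genH by simp
    thus "h \<in> pm ` carrier (SO_grp n)"
    proof induction
      case one
      have "pm (1\<^sub>m n) = \<one>\<^bsub>H\<^esub>" using group_hom.hom_one[OF gh_pm] by simp
      thus ?case using SO_one by (metis SO_grp_simps(1) image_eqI)
    next
      case (incl h)
      then obtain g where "g \<in> carrier (SO_grp n)" "h = pm g"
        using gens_img by blast
      thus ?case by blast
    next
      case (inv h)
      then obtain g where g: "g \<in> carrier (SO_grp n)" "h = pm g"
        using gens_img by blast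
      hence "inv\<^bsub>H\<^esub> h = pm (inv\<^bsub>SO_grp n\<^esub> g)" using group_hom.hom_inv[OF gh_pm] by simp
      moreover have "inv\<^bsub>SO_grp n\<^esub> g \<in> carrier (SO_grp n)" using group.inv_closed[OF group_SO g(1)] .
      ultimately show ?case by blast
    next
      case (eng h1 h2)
      then obtain g1 g2 where g: "g1 \<in> carrier (SO_grp n)" "h1 = pm g1" "g2 \<in> carrier (SO_grp n)" "h2 = pm g2"
        by blast
      hence "h1 \<otimes>\<^bsub>H\<^esub> h2 = pm (g1 \<otimes>\<^bsub>SO_grp n\<^esub> g2)" using hom_mult[OF pm_hom] by simp
      moreover have "g1 \<otimes>\<^bsub>SO_grp n\<^esub> g2 \<in> carrier (SO_grp n)" using g SO_mult by simp
      ultimately show ?case by blast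
    qed
  qed
qed

lemma pm_unique:
  assumes q: "q \<in> hom (SO_grp n) H"
    and qA: "\<forall>i. adj_pair n i \<longrightarrow> (\<forall>x\<in>carrier G_adj. q (tauA n i x) = sA i x)"
    and qF: "\<forall>i j. far_pair n i j \<longrightarrow> (\<forall>x\<in>carrier G_far. q (tauF n i j x) = sF i j x)"
  shows "\<forall>x\<in>carrier (SO_grp n). q x = pm x"
proof
  fix x assume "x \<in> carrier (SO_grp n)"
  hence "x \<in> generate (SO_grp n) (gensSO n)" using generate_SO[OF n3] by simp
  have ghq: "group_hom (SO_grp n) H q" by (rule group_homI[OF group_SO grpH q])
  have gens: "\<And>g. g \<in> gensSO n \<Longrightarrow> q g = pm g"
    unfolding gensSO_def using qA qF pm_tauA pm_tauF by auto
  show "q x = pm x" using \<open>x \<in> generate (SO_grp n) (gensSO n)\<close>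
  proof induction
    case one thus ?case using group_hom.hom_one[OF ghq] group_hom.hom_one[OF gh_pm] by simp
  next
    case (incl h) thus ?case using gens by simp
  next
    case (inv h)
    have "h \<in> carrier (SO_grp n)" using inv gensSO_sub by auto
    thus ?case using group_hom.hom_inv[OF ghq] group_hom.hom_inv[OF gh_pm] gens[OF inv] by simp
  next
    case (eng h1 h2)
    have gs: "gensSO n \<subseteq> carrier (SO_grp n)" using gensSO_sub by simp
    have "h1 \<in> carrier (SO_grp n)" "h2 \<in> carrier (SO_grp n)"
      using eng.hyps group.generate_incl[OF group_SO gs] by auto
    thus ?case using hom_mult[OF q] hom_mult[OF pm_hom] eng.IH by simp
  qed
qed

end

theorem mainTheorem5:
  fixes n :: nat
  assumes "n \<ge> 3"
  shows "enveloping n (SO_grp n) (tauA n) (tauF n) \<and>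
    (\<forall>(H :: 'b monoid) sA sF. enveloping n H sA sF \<longrightarrow>
       (\<exists>p. p \<in> hom (SO_grp n) H \<and> p ` carrier (SO_grp n) = carrier H \<and>
            (\<forall>i. adj_pair n i \<longrightarrow> (\<forall>x\<in>carrier G_adj. p (tauA n i x) = sA i x)) \<and>
            (\<forall>i j. far_pair n i j \<longrightarrow> (\<forall>x\<in>carrier G_far. p (tauF n i j x) = sF i j x)) \<and>
            (\<forall>q. q \<in> hom (SO_grp n) H \<and> q ` carrier (SO_grp n) = carrier H \<and>
                 (\<forall>i. adj_pair n i \<longrightarrow> (\<forall>x\<in>carrier G_adj. q (tauA n i x) = sA i x)) \<and>
                 (\<forall>i j. far_pair n i j \<longrightarrow> (\<forall>x\<in>carrier G_far. q (tauF n i j x) = sF i j x))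
                 \<longrightarrow> (\<forall>x\<in>carrier (SO_grp n). q x = p x))))"
proof (intro conjI allI impI)
  show "enveloping n (SO_grp n) (tauA n) (tauF n)" by (rule env_SO[OF assms])
  fix H :: "'b monoid" and sA sF assume e: "enveloping n H sA sF"
  interpret E: env_ctx n H sA sF by (unfold_locales) (use assms e in auto)
  show "\<exists>p. p \<in> hom (SO_grp n) H \<and> p ` carrier (SO_grp n) = carrier H \<and>
            (\<forall>i. adj_pair n i \<longrightarrow> (\<forall>x\<in>carrier G_adj. p (tauA n i x) = sA i x)) \<and>
            (\<forall>i j. far_pair n i j \<longrightarrow> (\<forall>x\<in>carrier G_far. p (tauF n i j x) = sF i j x)) \<and>
            (\<forall>q. q \<in> hom (SO_grp n) H \<and> q ` carrier (SO_grp n) = carrier H \<and>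
                 (\<forall>i. adj_pair n i \<longrightarrow> (\<forall>x\<in>carrier G_adj. q (tauA n i x) = sA i x)) \<and>
                 (\<forall>i j. far_pair n i j \<longrightarrow> (\<forall>x\<in>carrier G_far. q (tauF n i j x) = sF i j x))
                 \<longrightarrow> (\<forall>x\<in>carrier (SO_grp n). q x = p x))"
  proof (intro exI conjI allI impI)
    show "E.pm \<in> hom (SO_grp n) H" by (rule E.pm_hom)
    show "E.pm ` carrier (SO_grp n) = carrier H" by (rule E.pm_surj)
    show "\<And>i. adj_pair n i \<Longrightarrow> \<forall>x\<in>carrier G_adj. E.pm (tauA n i x) = sA i x"
      using E.pm_tauA by simp
    show "\<And>i j. far_pair n i j \<Longrightarrow> \<forall>x\<in>carrier G_far. E.pm (tauF n i j x) = sF i j x"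
      using E.pm_tauF by simp
    fix q assume "q \<in> hom (SO_grp n) H \<and> q ` carrier (SO_grp n) = carrier H \<and>
                 (\<forall>i. adj_pair n i \<longrightarrow> (\<forall>x\<in>carrier G_adj. q (tauA n i x) = sA i x)) \<and>
                 (\<forall>i j. far_pair n i j \<longrightarrow> (\<forall>x\<in>carrier G_far. q (tauF n i j x) = sF i j x))"
    thus "\<forall>x\<in>carrier (SO_grp n). q x = E.pm x" using E.pm_unique by blast
  qed
qed



end
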